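(* Let $M\subset\mathbb{R}^2$ be open with coordinates $(x,u)$, let $M^{(1)}$ be the first-order jet space with coordinates $(x,u,u_x)$, and consider the ODE $u_{xx}=\phi(x,u,u_x)$ with associated vector field $\mathbf{A}=\partial_x+u_x\partial_u+\phi\,\partial_{u_x}$. Let $(\partial_u,\lambda_1)$ and $(\partial_u,\lambda_2)$ be the canonical representatives of two non-equivalent generalized $\mathcal{C}^\infty$-symmetries of this ODE. Let $\mathbf{X}_i=\partial_u+\lambda_i\partial_{u_x}$, $\rho=\dfrac{\mathbf{X}_1(\lambda_2)-\mathbf{X}_2(\lambda_1)}{\lambda_1-\lambda_2}$, let $f_1,f_2\in C^\infty(M^{(1)})$ satisfy $\dfrac{\mathbf{X}_1(f_2)}{f_2}=\dfrac{\mathbf{X}_2(f_1)}{f_1}=\rho$, let $\mathbf{Y}_i=f_i\mathbf{X}_i$, $\rho_i=\lambda_i-\mathbf{A}(f_i)/f_i$, and let $g_1,g_2\in C^\infty(M^{(1)})$ satisfy $\mathbf{A}(g_1)=\rho_1g_1$, $\mathbf{Y}_2(g_1)=0$, $\mathbf{A}(g_2)=\rho_2g_2$, $\mathbf{Y}_1(g_2)=0$. Then: (1) The functions $$\mu_1=\frac{1}{f_2g_2(\lambda_2-\lambda_1)},\qquad \mu_2=\frac{1}{f_1g_1(\lambda_1-\lambda_2)}$$ are integrating factors of the ODE; a first integral $I_1$ (resp. $I_2$) of $\mathbf{A}$ associated to $(\partial_u,\lambda_1)$ (resp. $(\partial_u,\lambda_2)$) can be obtained by quadratures from $(I_1)_x=\mu_1(\lambda_1u_x-\phi)$,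 $(I_1)_u=-\lambda_1\mu_1$, $(I_1)_{u_x}=\mu_1$ (resp. $(I_2)_x=\mu_2(\lambda_2u_x-\phi)$, $(I_2)_u=-\lambda_2\mu_2$, $(I_2)_{u_x}=\mu_2$). (2) The function $$M=\frac{1}{f_1g_1f_2g_2(\lambda_2-\lambda_1)}$$ is a Jacobi last multiplier of the ODE.
   Context: All functions are smooth on $M^{(1)}$ and all statements are local, on an open set where $\lambda_1-\lambda_2$, $f_1,f_2,g_1,g_2$ do not vanish. For smooth $\xi,\eta,\lambda$ on $M^{(1)}$ and $\mathbf{v}=\xi\partial_x+\eta\partial_u$, the $\lambda$-prolongation is $\mathbf{v}^{[\lambda,(1)]}=\mathbf{v}+\big((\mathbf{A}+\lambda)(\eta)-(\mathbf{A}+\lambda)(\xi)u_x\big)\partial_{u_x}$. The pair $(\mathbf{v},\lambda)$ is a generalized $\mathcal{C}^\infty$-symmetry of the ODE if $[\mathbf{v}^{[\lambda,(1)]},\mathbf{A}]=\lambda\,\mathbf{v}^{[\lambda,(1)]}-(\mathbf{A}+\lambda)(\xi)\,\mathbf{A}$. A first integral of $\mathbf{A}$ associated to $(\mathbf{v},\lambda)$ is a function $I$ with $\mathbf{A}(I)=\mathbf{v}^{[\lambda,(1)]}(I)=0$. Two generalized $\mathcal{C}^\infty$-symmetries are $\mathbf{A}$-equivalent if $\{\mathbf{A},\mathbf{v}_1^{[\lambda_1,(1)]},\mathbf{v}_2^{[\lambda_2,(1)]}\}$ is linearly dependent over $C^\infty(M^{(1)})$; if $Q=\eta-\xi u_x$,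 the canonical representative of the class of $(\mathbf{v},\lambda)$ is $(\partial_u,\lambda+\mathbf{A}(Q)/Q)$. An integrating factor of the ODE is a function $\mu(x,u,u_x)$ such that $\mu\,(u_{xx}-\phi)=\mathbf{D}_x(I)$ for some function $I(x,u,u_x)$, where $\mathbf{D}_x=\partial_x+u_x\partial_u+u_{xx}\partial_{u_x}+\cdots$ is the total derivative. A Jacobi last multiplier of the ODE is a function $M(x,u,u_x)$ with $\mathbf{A}(M)+M\,\phi_{u_x}=0$. *)

theory Defs
  imports "HOL-Analysis.Analysis"
begin

text \<open>Functions on (an open subset of) the first-order jet space with coordinates
  (x,u,p), p standing for u_x, are represented curried.\<close>
type_synonym jfun = "real \<Rightarrow> real \<Rightarrow> real \<Rightarrow> real"

text \<open>A vector field a d/dx + b d/du + c d/dp as the triple of its components.\<close>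
type_synonym jvf = "jfun \<times> jfun \<times> jfun"

definition pdx :: "jfun \<Rightarrow> jfun" where
  "pdx F = (\<lambda>x u p. deriv (\<lambda>t. F t u p) x)"
definition pdu :: "jfun \<Rightarrow> jfun" where
  "pdu F = (\<lambda>x u p. deriv (\<lambda>t. F x t p) u)"
definition pdp :: "jfun \<Rightarrow> jfun" where
  "pdp F = (\<lambda>x u p. deriv (\<lambda>t. F x u t) p)"

fun iter_pd :: "nat list \<Rightarrow> jfun \<Rightarrow> jfun" where
  "iter_pd [] F = F"
| "iter_pd (d # ds) F =
     (if d = 0 then pdx (iter_pd ds F) else if d = 1 then pdu (iter_pd ds F)
      else pdp (iter_pd ds F))"

definition smooth_on :: "(real \<times> real \<times> real) set \<Rightarrow> jfun \<Rightarrow> bool" where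
  "smooth_on U F \<longleftrightarrow> (\<forall>ds. \<forall>z\<in>U.
      (\<lambda>(x,u,p). iter_pd ds F x u p) differentiable (at z))"

definition vf_apply :: "jvf \<Rightarrow> jfun \<Rightarrow> jfun" where
  "vf_apply V F = (case V of (a,b,c) \<Rightarrow>
      (\<lambda>x u p. a x u p * pdx F x u p + b x u p * pdu F x u p + c x u p * pdp F x u p))"

definition lie_bracket :: "jvf \<Rightarrow> jvf \<Rightarrow> jvf" where
  "lie_bracket V W = (case V of (a,b,c) \<Rightarrow> case W of (a',b',c') \<Rightarrow>
      (\<lambda>x u p. vf_apply V a' x u p - vf_apply W a x u p,
       \<lambda>x u p. vf_apply V b' x u p - vf_apply W b x u p,
       \<lambda>x u p. vf_apply V c' x u p - vf_apply W c x u p))"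

definition vf_eq_on :: "(real \<times> real \<times> real) set \<Rightarrow> jvf \<Rightarrow> jvf \<Rightarrow> bool" where
  "vf_eq_on U V W \<longleftrightarrow> (\<forall>(x,u,p)\<in>U.
      fst V x u p = fst W x u p \<and> fst (snd V) x u p = fst (snd W) x u p \<and>
      snd (snd V) x u p = snd (snd W) x u p)"

definition Avf :: "jfun \<Rightarrow> jvf" where
  "Avf phi = ((\<lambda>x u p. 1), (\<lambda>x u p. p), phi)"

definition Aplus :: "jfun \<Rightarrow> jfun \<Rightarrow> jfun \<Rightarrow> jfun" where
  "Aplus phi lam h = (\<lambda>x u p. vf_apply (Avf phi) h x u p + lam x u p * h x u p)"

definition lam_prol :: "jfun \<Rightarrow> jfun \<Rightarrow> jfun \<Rightarrow> jfun \<Rightarrow> jvf" where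
  "lam_prol phi xi eta lam = (xi, eta,
      (\<lambda>x u p. Aplus phi lam eta x u p - Aplus phi lam xi x u p * p))"

definition gen_Cinf_symmetry ::
  "(real \<times> real \<times> real) set \<Rightarrow> jfun \<Rightarrow> jfun \<Rightarrow> jfun \<Rightarrow> jfun \<Rightarrow> bool" where
  "gen_Cinf_symmetry U phi xi eta lam \<longleftrightarrow>
     smooth_on U xi \<and> smooth_on U eta \<and> smooth_on U lam \<and>
     vf_eq_on U (lie_bracket (lam_prol phi xi eta lam) (Avf phi))
       (let V = lam_prol phi xi eta lam; k = Aplus phi lam xi; A = Avf phi in
        (\<lambda>x u p. lam x u p * fst V x u p - k x u p * fst A x u p,
         \<lambda>x u p. lam x u p * fst (snd V) x u p - k x u p * fst (snd A) x u p,
         \<lambda>x u p. lam x u p * snd (snd V) x u p - k x u p * snd (snd A) x u p))"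

definition lin_dep_Cinf :: "(real \<times> real \<times> real) set \<Rightarrow> jvf \<Rightarrow> jvf \<Rightarrow> jvf \<Rightarrow> bool" where
  "lin_dep_Cinf U V1 V2 V3 \<longleftrightarrow> (\<exists>a b c. smooth_on U a \<and> smooth_on U b \<and> smooth_on U c \<and>
      (\<exists>(x,u,p)\<in>U. a x u p \<noteq> 0 \<or> b x u p \<noteq> 0 \<or> c x u p \<noteq> 0) \<and>
      (\<forall>(x,u,p)\<in>U.
         a x u p * fst V1 x u p + b x u p * fst V2 x u p + c x u p * fst V3 x u p = 0 \<and>
         a x u p * fst (snd V1) x u p + b x u p * fst (snd V2) x u p
           + c x u p * fst (snd V3) x u p = 0 \<and>
         a x u p * snd (snd V1) x u p + b x u p * snd (snd V2) x u p
           + c x u p * snd (snd V3) x u p = 0))"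

definition A_equivalent ::
  "(real \<times> real \<times> real) set \<Rightarrow> jfun \<Rightarrow> jfun \<Rightarrow> jfun \<Rightarrow> jfun \<Rightarrow> jfun \<Rightarrow> jfun \<Rightarrow> jfun \<Rightarrow> bool" where
  "A_equivalent U phi xi1 eta1 lam1 xi2 eta2 lam2 \<longleftrightarrow>
     lin_dep_Cinf U (Avf phi) (lam_prol phi xi1 eta1 lam1) (lam_prol phi xi2 eta2 lam2)"

definition first_integral_assoc ::
  "(real \<times> real \<times> real) set \<Rightarrow> jfun \<Rightarrow> jfun \<Rightarrow> jfun \<Rightarrow> jfun \<Rightarrow> jfun \<Rightarrow> bool" where
  "first_integral_assoc V phi xi eta lam I \<longleftrightarrow>
     (\<forall>(x,u,p)\<in>V. vf_apply (Avf phi) I x u p = 0 \<and>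
                   vf_apply (lam_prol phi xi eta lam) I x u p = 0)"

text \<open>mu (u_xx - phi) = D_x(I), with u_xx =: q a free jet coordinate;
  D_x I = I_x + p I_u + q I_p.\<close>
definition integrating_factor_on :: "(real \<times> real \<times> real) set \<Rightarrow> jfun \<Rightarrow> jfun \<Rightarrow> bool" where
  "integrating_factor_on V phi mu \<longleftrightarrow> (\<exists>I. smooth_on V I \<and>
     (\<forall>(x,u,p)\<in>V. \<forall>q. mu x u p * (q - phi x u p)
         = pdx I x u p + p * pdu I x u p + q * pdp I x u p))"

definition jacobi_last_multiplier :: "(real \<times> real \<times> real) set \<Rightarrow> jfun \<Rightarrow> jfun \<Rightarrow> bool" where
  "jacobi_last_multiplier V phi M \<longleftrightarrow>
     (\<forall>(x,u,p)\<in>V. vf_apply (Avf phi) M x u p + M x u p * pdp phi x u p = 0)"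

end

theory Submission
  imports Defs
begin

definition Dif :: "jfun \<Rightarrow> real \<Rightarrow> real \<Rightarrow> real \<Rightarrow> bool" where
  "Dif F x u p \<longleftrightarrow> (\<lambda>(x,u,p). F x u p) differentiable (at (x,u,p))"

lemma Dif_const[simp]: "Dif (\<lambda>x u p. c) x u p"
proof -
  have "(\<lambda>(x,u,p). c) = (\<lambda>z::real\<times>real\<times>real. c)" by auto
  thus ?thesis unfolding Dif_def by simp
qed

lemma Dif_X[simp]: "Dif (\<lambda>x u p. x) x u p"
proof -
  have eq: "(\<lambda>(x,u,p). x::real) = (\<lambda>z::real\<times>real\<times>real. fst z)" by auto
  have "(\<lambda>z::real\<times>real\<times>real. fst z) differentiable (at (x,u,p))"
    by (rule bounded_linear_imp_differentiable) (rule bounded_linear_fst)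
  thus ?thesis unfolding Dif_def eq .
qed

lemma Dif_U[simp]: "Dif (\<lambda>x u p. u) x u p"
proof -
  have eq: "(\<lambda>(x,u,p). u::real) = (\<lambda>z::real\<times>real\<times>real. fst (snd z))" by auto
  have "(\<lambda>z::real\<times>real\<times>real. fst (snd z)) differentiable (at (x,u,p))"
    by (rule bounded_linear_imp_differentiable) (rule bounded_linear_compose[OF bounded_linear_fst bounded_linear_snd])
  thus ?thesis unfolding Dif_def eq .
qed

lemma Dif_P[simp]: "Dif (\<lambda>x u p. p) x u p"
proof -
  have eq: "(\<lambda>(x,u,p). p::real) = (\<lambda>z::real\<times>real\<times>real. snd (snd z))" by auto
  have "(\<lambda>z::real\<times>real\<times>real. snd (snd z)) differentiable (at (x,u,p))"
    by (rule bounded_linear_imp_differentiable) (rule bounded_linear_compose[OF bounded_linear_snd bounded_linear_snd])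
  thus ?thesis unfolding Dif_def eq .
qed

lemma Dif_add[simp]: "Dif F x u p \<Longrightarrow> Dif G x u p \<Longrightarrow> Dif (\<lambda>x u p. F x u p + G x u p) x u p"
proof -
  assume a: "Dif F x u p" "Dif G x u p"
  have eq: "(\<lambda>(x,u,p). F x u p + G x u p) = (\<lambda>z. (\<lambda>(x,u,p). F x u p) z + (\<lambda>(x,u,p). G x u p) z)" by auto
  show ?thesis using a unfolding Dif_def eq by (rule differentiable_add)
qed

lemma Dif_diff[simp]: "Dif F x u p \<Longrightarrow> Dif G x u p \<Longrightarrow> Dif (\<lambda>x u p. F x u p - G x u p) x u p"
proof -
  assume a: "Dif F x u p" "Dif G x u p"
  have eq: "(\<lambda>(x,u,p). F x u p - G x u p) = (\<lambda>z. (\<lambda>(x,u,p). F x u p) z - (\<lambda>(x,u,p). G x u p) z)" by auto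
  show ?thesis using a unfolding Dif_def eq by (rule differentiable_diff)
qed

lemma Dif_mult[simp]: "Dif F x u p \<Longrightarrow> Dif G x u p \<Longrightarrow> Dif (\<lambda>x u p. F x u p * G x u p) x u p"
proof -
  assume a: "Dif F x u p" "Dif G x u p"
  have eq: "(\<lambda>(x,u,p). F x u p * G x u p) = (\<lambda>z. (\<lambda>(x,u,p). F x u p) z * (\<lambda>(x,u,p). G x u p) z)" by auto
  show ?thesis using a unfolding Dif_def eq by (rule differentiable_mult)
qed

lemma Dif_minus[simp]: "Dif F x u p \<Longrightarrow> Dif (\<lambda>x u p. - F x u p) x u p"
proof -
  assume a: "Dif F x u p"
  have eq: "(\<lambda>(x,u,p). - F x u p) = (\<lambda>z. - (\<lambda>(x,u,p). F x u p) z)" by auto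
  show ?thesis using a unfolding Dif_def eq by (rule differentiable_minus)
qed

lemma Dif_divide[simp]: "Dif F x u p \<Longrightarrow> Dif G x u p \<Longrightarrow> G x u p \<noteq> 0 \<Longrightarrow> Dif (\<lambda>x u p. F x u p / G x u p) x u p"
proof -
  assume a: "Dif F x u p" "Dif G x u p" "G x u p \<noteq> 0"
  have eq: "(\<lambda>(x,u,p). F x u p / G x u p) = (\<lambda>z. (\<lambda>(x,u,p). F x u p) z / (\<lambda>(x,u,p). G x u p) z)" by auto
  show ?thesis using a unfolding Dif_def eq by (intro differentiable_divide) auto
qed

lemma Dif_pdx:
  assumes "Dif F x u p"
  shows "((\<lambda>t. F t u p) has_real_derivative pdx F x u p) (at x)"
proof -
  have "(\<lambda>t. F t u p) = (\<lambda>(x,u,p). F x u p) \<circ> (\<lambda>t. (t,u,p))" by auto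
  moreover have "(\<lambda>t. (t,u,p)) differentiable (at x)"
    by (intro derivative_intros)
  ultimately have "(\<lambda>t. F t u p) differentiable (at x)"
    using assms unfolding Dif_def by (metis differentiable_chain_at)
  thus ?thesis unfolding pdx_def by (simp add: DERIV_deriv_iff_real_differentiable)
qed

lemma pdx_eq: "((\<lambda>t. F t u p) has_real_derivative D) (at x) \<Longrightarrow> pdx F x u p = D"
  unfolding pdx_def by (rule DERIV_imp_deriv)

lemma pdx_const[simp]: "pdx (\<lambda>x u p. c) x u p = 0"
  by (rule pdx_eq) (rule DERIV_const)

lemma pdx_add[simp]: "Dif F x u p \<Longrightarrow> Dif G x u p \<Longrightarrow> pdx (\<lambda>x u p. F x u p + G x u p) x u p = pdx F x u p + pdx G x u p"
  by (rule pdx_eq) (intro DERIV_add Dif_pdx)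

lemma pdx_diff[simp]: "Dif F x u p \<Longrightarrow> Dif G x u p \<Longrightarrow> pdx (\<lambda>x u p. F x u p - G x u p) x u p = pdx F x u p - pdx G x u p"
  by (rule pdx_eq) (intro DERIV_diff Dif_pdx)

lemma pdx_minus[simp]: "Dif F x u p \<Longrightarrow> pdx (\<lambda>x u p. - F x u p) x u p = - pdx F x u p"
  by (rule pdx_eq) (intro DERIV_minus Dif_pdx)

lemma pdx_mult[simp]: "Dif F x u p \<Longrightarrow> Dif G x u p \<Longrightarrow> pdx (\<lambda>x u p. F x u p * G x u p) x u p = pdx F x u p * G x u p + F x u p * pdx G x u p"
  by (rule pdx_eq) (auto intro!: derivative_eq_intros Dif_pdx)

lemma pdx_divide[simp]: "Dif F x u p \<Longrightarrow> Dif G x u p \<Longrightarrow> G x u p \<noteq> 0 \<Longrightarrow>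
   pdx (\<lambda>x u p. F x u p / G x u p) x u p = (pdx F x u p * G x u p - F x u p * pdx G x u p) / (G x u p * G x u p)"
  by (rule pdx_eq) (intro DERIV_divide Dif_pdx)

lemma Dif_pdu:
  assumes "Dif F x u p"
  shows "((\<lambda>t. F x t p) has_real_derivative pdu F x u p) (at u)"
proof -
  have "(\<lambda>t. F x t p) = (\<lambda>(x,u,p). F x u p) \<circ> (\<lambda>t. (x,t,p))" by auto
  moreover have "(\<lambda>t. (x,t,p)) differentiable (at u)"
    by (intro derivative_intros)
  ultimately have "(\<lambda>t. F x t p) differentiable (at u)"
    using assms unfolding Dif_def by (metis differentiable_chain_at)
  thus ?thesis unfolding pdu_def by (simp add: DERIV_deriv_iff_real_differentiable)
qed

lemma pdu_eq: "((\<lambda>t. F x t p) has_real_derivative D) (at u) \<Longrightarrow> pdu F x u p = D"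
  unfolding pdu_def by (rule DERIV_imp_deriv)

lemma pdu_const[simp]: "pdu (\<lambda>x u p. c) x u p = 0"
  by (rule pdu_eq) (rule DERIV_const)

lemma pdu_add[simp]: "Dif F x u p \<Longrightarrow> Dif G x u p \<Longrightarrow> pdu (\<lambda>x u p. F x u p + G x u p) x u p = pdu F x u p + pdu G x u p"
  by (rule pdu_eq) (intro DERIV_add Dif_pdu)

lemma pdu_diff[simp]: "Dif F x u p \<Longrightarrow> Dif G x u p \<Longrightarrow> pdu (\<lambda>x u p. F x u p - G x u p) x u p = pdu F x u p - pdu G x u p"
  by (rule pdu_eq) (intro DERIV_diff Dif_pdu)

lemma pdu_minus[simp]: "Dif F x u p \<Longrightarrow> pdu (\<lambda>x u p. - F x u p) x u p = - pdu F x u p"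
  by (rule pdu_eq) (intro DERIV_minus Dif_pdu)

lemma pdu_mult[simp]: "Dif F x u p \<Longrightarrow> Dif G x u p \<Longrightarrow> pdu (\<lambda>x u p. F x u p * G x u p) x u p = pdu F x u p * G x u p + F x u p * pdu G x u p"
  by (rule pdu_eq) (auto intro!: derivative_eq_intros Dif_pdu)

lemma pdu_divide[simp]: "Dif F x u p \<Longrightarrow> Dif G x u p \<Longrightarrow> G x u p \<noteq> 0 \<Longrightarrow>
   pdu (\<lambda>x u p. F x u p / G x u p) x u p = (pdu F x u p * G x u p - F x u p * pdu G x u p) / (G x u p * G x u p)"
  by (rule pdu_eq) (intro DERIV_divide Dif_pdu)

lemma Dif_pdp:
  assumes "Dif F x u p"
  shows "((\<lambda>t. F x u t) has_real_derivative pdp F x u p) (at p)"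
proof -
  have "(\<lambda>t. F x u t) = (\<lambda>(x,u,p). F x u p) \<circ> (\<lambda>t. (x,u,t))" by auto
  moreover have "(\<lambda>t. (x,u,t)) differentiable (at p)"
    by (intro derivative_intros)
  ultimately have "(\<lambda>t. F x u t) differentiable (at p)"
    using assms unfolding Dif_def by (metis differentiable_chain_at)
  thus ?thesis unfolding pdp_def by (simp add: DERIV_deriv_iff_real_differentiable)
qed

lemma pdp_eq: "((\<lambda>t. F x u t) has_real_derivative D) (at p) \<Longrightarrow> pdp F x u p = D"
  unfolding pdp_def by (rule DERIV_imp_deriv)

lemma pdp_const[simp]: "pdp (\<lambda>x u p. c) x u p = 0"
  by (rule pdp_eq) (rule DERIV_const)

lemma pdp_add[simp]: "Dif F x u p \<Longrightarrow> Dif G x u p \<Longrightarrow> pdp (\<lambda>x u p. F x u p + G x u p) x u p = pdp F x u p + pdp G x u p"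
  by (rule pdp_eq) (intro DERIV_add Dif_pdp)

lemma pdp_diff[simp]: "Dif F x u p \<Longrightarrow> Dif G x u p \<Longrightarrow> pdp (\<lambda>x u p. F x u p - G x u p) x u p = pdp F x u p - pdp G x u p"
  by (rule pdp_eq) (intro DERIV_diff Dif_pdp)

lemma pdp_minus[simp]: "Dif F x u p \<Longrightarrow> pdp (\<lambda>x u p. - F x u p) x u p = - pdp F x u p"
  by (rule pdp_eq) (intro DERIV_minus Dif_pdp)

lemma pdp_mult[simp]: "Dif F x u p \<Longrightarrow> Dif G x u p \<Longrightarrow> pdp (\<lambda>x u p. F x u p * G x u p) x u p = pdp F x u p * G x u p + F x u p * pdp G x u p"
  by (rule pdp_eq) (auto intro!: derivative_eq_intros Dif_pdp)

lemma pdp_divide[simp]: "Dif F x u p \<Longrightarrow> Dif G x u p \<Longrightarrow> G x u p \<noteq> 0 \<Longrightarrow>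
   pdp (\<lambda>x u p. F x u p / G x u p) x u p = (pdp F x u p * G x u p - F x u p * pdp G x u p) / (G x u p * G x u p)"
  by (rule pdp_eq) (intro DERIV_divide Dif_pdp)

lemma pdx_X[simp]: "pdx (\<lambda>x u p. x) x u p = 1" by (rule pdx_eq) (rule DERIV_ident)
lemma pdx_U[simp]: "pdx (\<lambda>x u p. u) x u p = 0" by (rule pdx_eq) (rule DERIV_const)
lemma pdx_P[simp]: "pdx (\<lambda>x u p. p) x u p = 0" by (rule pdx_eq) (rule DERIV_const)
lemma pdu_X[simp]: "pdu (\<lambda>x u p. x) x u p = 0" by (rule pdu_eq) (rule DERIV_const)
lemma pdu_U[simp]: "pdu (\<lambda>x u p. u) x u p = 1" by (rule pdu_eq) (rule DERIV_ident)
lemma pdu_P[simp]: "pdu (\<lambda>x u p. p) x u p = 0" by (rule pdu_eq) (rule DERIV_const)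
lemma pdp_X[simp]: "pdp (\<lambda>x u p. x) x u p = 0" by (rule pdp_eq) (rule DERIV_const)
lemma pdp_U[simp]: "pdp (\<lambda>x u p. u) x u p = 0" by (rule pdp_eq) (rule DERIV_const)
lemma pdp_P[simp]: "pdp (\<lambda>x u p. p) x u p = 1" by (rule pdp_eq) (rule DERIV_ident)

definition pdd :: "nat \<Rightarrow> jfun \<Rightarrow> jfun" where
  "pdd d F = (if d = 0 then pdx F else if d = 1 then pdu F else pdp F)"

lemma iter_pd_Cons': "iter_pd (d#ds) F = pdd d (iter_pd ds F)"
  by (simp add: pdd_def)

lemma iter_pd_snoc: "iter_pd (ds@[d]) F = iter_pd ds (pdd d F)"
  by (induction ds) (auto simp: pdd_def)

lemma ev_line_x: "open (V::(real\<times>real\<times>real) set) \<Longrightarrow> (x,u,p)\<in>V \<Longrightarrow> eventually (\<lambda>t. (t,u,p)\<in>V) (nhds x)"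
proof -
  assume V: "open V" "(x,u,p)\<in>V"
  have "open ((\<lambda>t::real. (t,u,p)) -` V)" by (intro continuous_open_vimage V(1)) (intro continuous_intros)
  from eventually_nhds_in_open[OF this] show ?thesis using V by simp
qed

lemma ev_line_u: "open (V::(real\<times>real\<times>real) set) \<Longrightarrow> (x,u,p)\<in>V \<Longrightarrow> eventually (\<lambda>t. (x,t,p)\<in>V) (nhds u)"
proof -
  assume V: "open V" "(x,u,p)\<in>V"
  have "open ((\<lambda>t::real. (x,t,p)) -` V)" by (intro continuous_open_vimage V(1)) (intro continuous_intros)
  from eventually_nhds_in_open[OF this] show ?thesis using V by simp
qed

lemma ev_line_p: "open (V::(real\<times>real\<times>real) set) \<Longrightarrow> (x,u,p)\<in>V \<Longrightarrow> eventually (\<lambda>t. (x,u,t)\<in>V) (nhds p)"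
proof -
  assume V: "open V" "(x,u,p)\<in>V"
  have "open ((\<lambda>t::real. (x,u,t)) -` V)" by (intro continuous_open_vimage V(1)) (intro continuous_intros)
  from eventually_nhds_in_open[OF this] show ?thesis using V by simp
qed

lemma pdd_local:
  assumes "open V" "(x,u,p)\<in>V" "\<forall>(x,u,p)\<in>V. F x u p = G x u p"
  shows "pdd d F x u p = pdd d G x u p"
proof -
  have "pdx F x u p = pdx G x u p" unfolding pdx_def
    by (rule deriv_cong_ev[OF _ refl], rule eventually_mono[OF ev_line_x[OF assms(1,2)]]) (use assms(3) in auto)
  moreover have "pdu F x u p = pdu G x u p" unfolding pdu_def
    by (rule deriv_cong_ev[OF _ refl], rule eventually_mono[OF ev_line_u[OF assms(1,2)]]) (use assms(3) in auto)
  moreover have "pdp F x u p = pdp G x u p" unfolding pdp_def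
    by (rule deriv_cong_ev[OF _ refl], rule eventually_mono[OF ev_line_p[OF assms(1,2)]]) (use assms(3) in auto)
  ultimately show ?thesis by (simp add: pdd_def)
qed

lemma iter_pd_local:
  assumes "open V" "\<forall>(x,u,p)\<in>V. F x u p = G x u p"
  shows "\<forall>(x,u,p)\<in>V. iter_pd ds F x u p = iter_pd ds G x u p"
proof (induction ds)
  case Nil thus ?case using assms by simp
next
  case (Cons d ds)
  show ?case unfolding iter_pd_Cons' using pdd_local[OF assms(1) _ Cons] by auto
qed

lemma Dif_local:
  assumes "open V" "(x,u,p)\<in>V" "\<forall>(x,u,p)\<in>V. F x u p = G x u p" "Dif F x u p"
  shows "Dif G x u p"
proof -
  obtain D where D: "((\<lambda>(x,u,p). F x u p) has_derivative D) (at (x,u,p))"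
    using assms(4) unfolding Dif_def differentiable_def by blast
  have "((\<lambda>(x,u,p). G x u p) has_derivative D) (at (x,u,p))"
    by (rule has_derivative_transform_within_open[OF D assms(1,2)]) (use assms(3) in auto)
  thus ?thesis unfolding Dif_def differentiable_def by blast
qed

lemma ball3I: "(\<And>x u p. (x,u,p)\<in>U \<Longrightarrow> P x u p) \<Longrightarrow> \<forall>(x,u,p)\<in>U. P x u p" by auto
lemma ball3D: "\<forall>(x,u,p)\<in>U. P x u p \<Longrightarrow> (x,u,p)\<in>U \<Longrightarrow> P x u p" by auto

definition smn :: "nat \<Rightarrow> (real\<times>real\<times>real) set \<Rightarrow> jfun \<Rightarrow> bool" where
  "smn n U F \<longleftrightarrow> (\<forall>ds. length ds \<le> n \<longrightarrow> (\<forall>(x,u,p)\<in>U. Dif (iter_pd ds F) x u p))"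

lemma smooth_on_smn: "smooth_on U F \<longleftrightarrow> (\<forall>n. smn n U F)"
  unfolding smooth_on_def smn_def Dif_def by fastforce

lemma smn_0: "smn 0 U F \<longleftrightarrow> (\<forall>(x,u,p)\<in>U. Dif F x u p)"
  unfolding smn_def by auto

lemma smn_Suc: "smn (Suc n) U F \<longleftrightarrow> (\<forall>(x,u,p)\<in>U. Dif F x u p) \<and> (\<forall>d. smn n U (pdd d F))"
proof
  assume a: "smn (Suc n) U F"
  have "\<forall>(x,u,p)\<in>U. Dif F x u p" using a[unfolded smn_def, rule_format, of "[]"] by auto
  moreover have "smn n U (pdd d F)" for d
    unfolding smn_def
  proof (intro allI impI)
    fix ds :: "nat list" assume "length ds \<le> n"
    thus "\<forall>(x,u,p)\<in>U. Dif (iter_pd ds (pdd d F)) x u p"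
      using a[unfolded smn_def, rule_format, of "ds@[d]"] by (simp add: iter_pd_snoc)
  qed
  ultimately show "(\<forall>(x,u,p)\<in>U. Dif F x u p) \<and> (\<forall>d. smn n U (pdd d F))" by blast
next
  assume a: "(\<forall>(x,u,p)\<in>U. Dif F x u p) \<and> (\<forall>d. smn n U (pdd d F))"
  show "smn (Suc n) U F" unfolding smn_def
  proof (intro allI impI)
    fix ds :: "nat list" assume l: "length ds \<le> Suc n"
    show "\<forall>(x,u,p)\<in>U. Dif (iter_pd ds F) x u p"
    proof (cases ds rule: rev_exhaust)
      case Nil thus ?thesis using a by simp
    next
      case (snoc ds' d)
      thus ?thesis using l a[THEN conjunct2, rule_format, of d, unfolded smn_def, rule_format, of ds']
        by (simp add: iter_pd_snoc)
    qed
  qed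
qed

lemma smn_mono: "m \<le> n \<Longrightarrow> smn n U F \<Longrightarrow> smn m U F"
  unfolding smn_def by auto

lemma smn_local:
  assumes "open U" "\<forall>(x,u,p)\<in>U. F x u p = G x u p" "smn n U F"
  shows "smn n U G"
  unfolding smn_def
proof (intro allI impI)
  fix ds :: "nat list" assume "length ds \<le> n"
  hence d: "\<forall>(x,u,p)\<in>U. Dif (iter_pd ds F) x u p" using assms(3) unfolding smn_def by blast
  have e: "\<forall>(x,u,p)\<in>U. iter_pd ds F x u p = iter_pd ds G x u p" by (rule iter_pd_local[OF assms(1,2)])
  show "\<forall>(x,u,p)\<in>U. Dif (iter_pd ds G) x u p"
    using Dif_local[OF assms(1) _ e] d by auto
qed

lemma pdd_const[simp]: "pdd d (\<lambda>x u p. c) x u p = 0" by (simp add: pdd_def)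
lemma pdd_add: "Dif F x u p \<Longrightarrow> Dif G x u p \<Longrightarrow> pdd d (\<lambda>x u p. F x u p + G x u p) x u p = pdd d F x u p + pdd d G x u p"
  by (simp add: pdd_def)
lemma pdd_diff: "Dif F x u p \<Longrightarrow> Dif G x u p \<Longrightarrow> pdd d (\<lambda>x u p. F x u p - G x u p) x u p = pdd d F x u p - pdd d G x u p"
  by (simp add: pdd_def)
lemma pdd_mult: "Dif F x u p \<Longrightarrow> Dif G x u p \<Longrightarrow> pdd d (\<lambda>x u p. F x u p * G x u p) x u p = pdd d F x u p * G x u p + F x u p * pdd d G x u p"
  by (simp add: pdd_def)
lemma pdd_divide: "Dif F x u p \<Longrightarrow> Dif G x u p \<Longrightarrow> G x u p \<noteq> 0 \<Longrightarrow>
   pdd d (\<lambda>x u p. F x u p / G x u p) x u p = (pdd d F x u p * G x u p - F x u p * pdd d G x u p) / (G x u p * G x u p)"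
  by (simp add: pdd_def)
lemma pdd_X: "\<exists>c. \<forall>x u p. pdd d (\<lambda>x u p. x) x u p = c" by (auto simp: pdd_def)
lemma pdd_U: "\<exists>c. \<forall>x u p. pdd d (\<lambda>x u p. u) x u p = c" by (auto simp: pdd_def)
lemma pdd_P: "\<exists>c. \<forall>x u p. pdd d (\<lambda>x u p. p) x u p = c" by (auto simp: pdd_def)

lemma smn_const: "open U \<Longrightarrow> smn n U (\<lambda>x u p. c)"
proof (induction n arbitrary: c)
  case 0 thus ?case by (simp add: smn_0)
next
  case (Suc n)
  show ?case unfolding smn_Suc
    using smn_local[OF Suc.prems _ Suc.IH[OF Suc.prems, of 0]] by auto
qed

lemma smn_X: assumes "open U" shows "smn n U (\<lambda>x u p. x)"
proof (cases n)
  case 0 thus ?thesis by (simp add: smn_0)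
next
  case (Suc m)
  have "smn m U (pdd d (\<lambda>x u p. x))" for d
    by (rule smn_local[OF assms _ smn_const[OF assms, of m "if d = 0 then 1 else 0"]]) (auto simp: pdd_def)
  thus ?thesis unfolding Suc smn_Suc by (auto intro!: ball3I)
qed

lemma smn_U: assumes "open U" shows "smn n U (\<lambda>x u p. u)"
proof (cases n)
  case 0 thus ?thesis by (simp add: smn_0)
next
  case (Suc m)
  have "smn m U (pdd d (\<lambda>x u p. u))" for d
    by (rule smn_local[OF assms _ smn_const[OF assms, of m "if d = 1 then 1 else 0"]]) (auto simp: pdd_def)
  thus ?thesis unfolding Suc smn_Suc by (auto intro!: ball3I)
qed

lemma smn_P: assumes "open U" shows "smn n U (\<lambda>x u p. p)"
proof (cases n)
  case 0 thus ?thesis by (simp add: smn_0)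
next
  case (Suc m)
  have "smn m U (pdd d (\<lambda>x u p. p))" for d
    by (rule smn_local[OF assms _ smn_const[OF assms, of m "if d = 0 then 0 else if d = 1 then 0 else 1"]]) (auto simp: pdd_def)
  thus ?thesis unfolding Suc smn_Suc by (auto intro!: ball3I)
qed


lemma smn_add: "open U \<Longrightarrow> smn n U F \<Longrightarrow> smn n U G \<Longrightarrow> smn n U (\<lambda>x u p. F x u p + G x u p)"
proof (induction n arbitrary: F G)
  case 0
  show ?case unfolding smn_0
  proof (intro ball3I)
    fix x u p assume "(x,u,p)\<in>U" thus "Dif (\<lambda>x u p. F x u p + G x u p) x u p"
      using ball3D[OF 0(2)[unfolded smn_0]] ball3D[OF 0(3)[unfolded smn_0]]  by simp
  qed
next
  case (Suc n)
  have dF: "\<forall>(x,u,p)\<in>U. Dif F x u p" and dG: "\<forall>(x,u,p)\<in>U. Dif G x u p"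
    using Suc.prems unfolding smn_Suc by auto
  have F': "smn n U F" and G': "smn n U G" using Suc.prems smn_mono[of n "Suc n"] by auto
  have "smn n U (pdd d (\<lambda>x u p. F x u p + G x u p))" for d
  proof -
    have H: "smn n U (\<lambda>x u p. pdd d F x u p + pdd d G x u p)"
      by (rule Suc.IH) (use Suc.prems in \<open>auto simp: smn_Suc\<close>)
    have eq: "\<forall>(x,u,p)\<in>U. pdd d F x u p + pdd d G x u p = pdd d (\<lambda>x u p. F x u p + G x u p) x u p"
    proof (intro ball3I)
      fix x u p assume "(x,u,p)\<in>U" thus "pdd d F x u p + pdd d G x u p = pdd d (\<lambda>x u p. F x u p + G x u p) x u p"
        using ball3D[OF dF] ball3D[OF dG]  by (simp add: pdd_add)
    qed
    show ?thesis by (rule smn_local[OF Suc.prems(1) eq H])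
  qed
  moreover have "\<forall>(x,u,p)\<in>U. Dif (\<lambda>x u p. F x u p + G x u p) x u p"
  proof (intro ball3I)
    fix x u p assume "(x,u,p)\<in>U" thus "Dif (\<lambda>x u p. F x u p + G x u p) x u p"
      using ball3D[OF dF] ball3D[OF dG]  by simp
  qed
  ultimately show ?case unfolding smn_Suc by blast
qed

lemma smn_diff: "open U \<Longrightarrow> smn n U F \<Longrightarrow> smn n U G \<Longrightarrow> smn n U (\<lambda>x u p. F x u p - G x u p)"
proof (induction n arbitrary: F G)
  case 0
  show ?case unfolding smn_0
  proof (intro ball3I)
    fix x u p assume "(x,u,p)\<in>U" thus "Dif (\<lambda>x u p. F x u p - G x u p) x u p"
      using ball3D[OF 0(2)[unfolded smn_0]] ball3D[OF 0(3)[unfolded smn_0]]  by simp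
  qed
next
  case (Suc n)
  have dF: "\<forall>(x,u,p)\<in>U. Dif F x u p" and dG: "\<forall>(x,u,p)\<in>U. Dif G x u p"
    using Suc.prems unfolding smn_Suc by auto
  have F': "smn n U F" and G': "smn n U G" using Suc.prems smn_mono[of n "Suc n"] by auto
  have "smn n U (pdd d (\<lambda>x u p. F x u p - G x u p))" for d
  proof -
    have H: "smn n U (\<lambda>x u p. pdd d F x u p - pdd d G x u p)"
      by (rule Suc.IH) (use Suc.prems in \<open>auto simp: smn_Suc\<close>)
    have eq: "\<forall>(x,u,p)\<in>U. pdd d F x u p - pdd d G x u p = pdd d (\<lambda>x u p. F x u p - G x u p) x u p"
    proof (intro ball3I)
      fix x u p assume "(x,u,p)\<in>U" thus "pdd d F x u p - pdd d G x u p = pdd d (\<lambda>x u p. F x u p - G x u p) x u p"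
        using ball3D[OF dF] ball3D[OF dG]  by (simp add: pdd_diff)
    qed
    show ?thesis by (rule smn_local[OF Suc.prems(1) eq H])
  qed
  moreover have "\<forall>(x,u,p)\<in>U. Dif (\<lambda>x u p. F x u p - G x u p) x u p"
  proof (intro ball3I)
    fix x u p assume "(x,u,p)\<in>U" thus "Dif (\<lambda>x u p. F x u p - G x u p) x u p"
      using ball3D[OF dF] ball3D[OF dG]  by simp
  qed
  ultimately show ?case unfolding smn_Suc by blast
qed

lemma smn_mult: "open U \<Longrightarrow> smn n U F \<Longrightarrow> smn n U G \<Longrightarrow> smn n U (\<lambda>x u p. F x u p * G x u p)"
proof (induction n arbitrary: F G)
  case 0
  show ?case unfolding smn_0
  proof (intro ball3I)
    fix x u p assume "(x,u,p)\<in>U" thus "Dif (\<lambda>x u p. F x u p * G x u p) x u p"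
      using ball3D[OF 0(2)[unfolded smn_0]] ball3D[OF 0(3)[unfolded smn_0]]  by simp
  qed
next
  case (Suc n)
  have dF: "\<forall>(x,u,p)\<in>U. Dif F x u p" and dG: "\<forall>(x,u,p)\<in>U. Dif G x u p"
    using Suc.prems unfolding smn_Suc by auto
  have F': "smn n U F" and G': "smn n U G" using Suc.prems smn_mono[of n "Suc n"] by auto
  have "smn n U (pdd d (\<lambda>x u p. F x u p * G x u p))" for d
  proof -
    have H: "smn n U (\<lambda>x u p. pdd d F x u p * G x u p + F x u p * pdd d G x u p)"
      by (rule smn_add[OF Suc.prems(1) Suc.IH Suc.IH]) (use Suc.prems F' G' in \<open>auto simp: smn_Suc\<close>)
    have eq: "\<forall>(x,u,p)\<in>U. pdd d F x u p * G x u p + F x u p * pdd d G x u p = pdd d (\<lambda>x u p. F x u p * G x u p) x u p"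
    proof (intro ball3I)
      fix x u p assume "(x,u,p)\<in>U" thus "pdd d F x u p * G x u p + F x u p * pdd d G x u p = pdd d (\<lambda>x u p. F x u p * G x u p) x u p"
        using ball3D[OF dF] ball3D[OF dG]  by (simp add: pdd_mult)
    qed
    show ?thesis by (rule smn_local[OF Suc.prems(1) eq H])
  qed
  moreover have "\<forall>(x,u,p)\<in>U. Dif (\<lambda>x u p. F x u p * G x u p) x u p"
  proof (intro ball3I)
    fix x u p assume "(x,u,p)\<in>U" thus "Dif (\<lambda>x u p. F x u p * G x u p) x u p"
      using ball3D[OF dF] ball3D[OF dG]  by simp
  qed
  ultimately show ?case unfolding smn_Suc by blast
qed

lemma smn_divide: "open U \<Longrightarrow> smn n U F \<Longrightarrow> smn n U G \<Longrightarrow> \<forall>(x,u,p)\<in>U. G x u p \<noteq> 0 \<Longrightarrow> smn n U (\<lambda>x u p. F x u p / G x u p)"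
proof (induction n arbitrary: F G)
  case 0
  show ?case unfolding smn_0
  proof (intro ball3I)
    fix x u p assume "(x,u,p)\<in>U" thus "Dif (\<lambda>x u p. F x u p / G x u p) x u p"
      using ball3D[OF 0(2)[unfolded smn_0]] ball3D[OF 0(3)[unfolded smn_0]] ball3D[OF 0(4)] by simp
  qed
next
  case (Suc n)
  have dF: "\<forall>(x,u,p)\<in>U. Dif F x u p" and dG: "\<forall>(x,u,p)\<in>U. Dif G x u p"
    using Suc.prems unfolding smn_Suc by auto
  have F': "smn n U F" and G': "smn n U G" using Suc.prems smn_mono[of n "Suc n"] by auto
  have "smn n U (pdd d (\<lambda>x u p. F x u p / G x u p))" for d
  proof -
    have H: "smn n U (\<lambda>x u p. (pdd d F x u p * G x u p - F x u p * pdd d G x u p) / (G x u p * G x u p))"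
      by (rule Suc.IH) (use Suc.prems F' G' in \<open>auto simp: smn_Suc intro!: smn_diff smn_mult\<close>)
    have eq: "\<forall>(x,u,p)\<in>U. (pdd d F x u p * G x u p - F x u p * pdd d G x u p) / (G x u p * G x u p) = pdd d (\<lambda>x u p. F x u p / G x u p) x u p"
    proof (intro ball3I)
      fix x u p assume "(x,u,p)\<in>U" thus "(pdd d F x u p * G x u p - F x u p * pdd d G x u p) / (G x u p * G x u p) = pdd d (\<lambda>x u p. F x u p / G x u p) x u p"
        using ball3D[OF dF] ball3D[OF dG] ball3D[OF Suc.prems(4)] by (simp add: pdd_divide)
    qed
    show ?thesis by (rule smn_local[OF Suc.prems(1) eq H])
  qed
  moreover have "\<forall>(x,u,p)\<in>U. Dif (\<lambda>x u p. F x u p / G x u p) x u p"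
  proof (intro ball3I)
    fix x u p assume "(x,u,p)\<in>U" thus "Dif (\<lambda>x u p. F x u p / G x u p) x u p"
      using ball3D[OF dF] ball3D[OF dG] ball3D[OF Suc.prems(4)] by simp
  qed
  ultimately show ?case unfolding smn_Suc by blast
qed

lemma smooth_const: "open U \<Longrightarrow> smooth_on U (\<lambda>x u p. c)"
  by (simp add: smooth_on_smn smn_const)
lemma smooth_X: "open U \<Longrightarrow> smooth_on U (\<lambda>x u p. x)"
  by (simp add: smooth_on_smn smn_X)
lemma smooth_U: "open U \<Longrightarrow> smooth_on U (\<lambda>x u p. u)"
  by (simp add: smooth_on_smn smn_U)
lemma smooth_P: "open U \<Longrightarrow> smooth_on U (\<lambda>x u p. p)"
  by (simp add: smooth_on_smn smn_P)
lemma smooth_add: "open U \<Longrightarrow> smooth_on U F \<Longrightarrow> smooth_on U G \<Longrightarrow> smooth_on U (\<lambda>x u p. F x u p + G x u p)"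
  by (simp add: smooth_on_smn smn_add)
lemma smooth_diff: "open U \<Longrightarrow> smooth_on U F \<Longrightarrow> smooth_on U G \<Longrightarrow> smooth_on U (\<lambda>x u p. F x u p - G x u p)"
  by (simp add: smooth_on_smn smn_diff)
lemma smooth_mult: "open U \<Longrightarrow> smooth_on U F \<Longrightarrow> smooth_on U G \<Longrightarrow> smooth_on U (\<lambda>x u p. F x u p * G x u p)"
  by (simp add: smooth_on_smn smn_mult)
lemma smooth_divide: "open U \<Longrightarrow> smooth_on U F \<Longrightarrow> smooth_on U G \<Longrightarrow> \<forall>(x,u,p)\<in>U. G x u p \<noteq> 0 \<Longrightarrow>
   smooth_on U (\<lambda>x u p. F x u p / G x u p)"
  by (simp add: smooth_on_smn smn_divide)
lemma smooth_minus: "open U \<Longrightarrow> smooth_on U F \<Longrightarrow> smooth_on U (\<lambda>x u p. - F x u p)"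
proof -
  assume a: "open U" "smooth_on U F"
  have "smooth_on U (\<lambda>x u p. 0 - F x u p)" by (rule smooth_diff[OF a(1) smooth_const[OF a(1)] a(2)])
  thus ?thesis by simp
qed
lemma smooth_Dif: "smooth_on U F \<Longrightarrow> (x,u,p)\<in>U \<Longrightarrow> Dif F x u p"
proof -
  assume a: "smooth_on U F" "(x,u,p)\<in>U"
  hence "smn 0 U F" by (simp add: smooth_on_smn)
  thus ?thesis using a(2) unfolding smn_0 by (rule ball3D)
qed
lemma smooth_pdd: "smooth_on U F \<Longrightarrow> smooth_on U (pdd d F)"
  unfolding smooth_on_smn by (metis smn_Suc)
lemma smooth_pdx: "smooth_on U F \<Longrightarrow> smooth_on U (pdx F)"
  using smooth_pdd[of U F 0] by (simp add: pdd_def)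
lemma smooth_pdu: "smooth_on U F \<Longrightarrow> smooth_on U (pdu F)"
  using smooth_pdd[of U F 1] by (simp add: pdd_def)
lemma smooth_pdp: "smooth_on U F \<Longrightarrow> smooth_on U (pdp F)"
  using smooth_pdd[of U F 2] by (simp add: pdd_def)
lemma smooth_subset: "V \<subseteq> U \<Longrightarrow> smooth_on U F \<Longrightarrow> smooth_on V F"
  unfolding smooth_on_def by blast
lemma smooth_local: "open U \<Longrightarrow> \<forall>(x,u,p)\<in>U. F x u p = G x u p \<Longrightarrow> smooth_on U F \<Longrightarrow> smooth_on U G"
  unfolding smooth_on_smn using smn_local by blast
lemma smooth_intro: "open U \<Longrightarrow> \<forall>(x,u,p)\<in>U. Dif F x u p \<Longrightarrow> smooth_on U (pdx F) \<Longrightarrow>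
   smooth_on U (pdu F) \<Longrightarrow> smooth_on U (pdp F) \<Longrightarrow> smooth_on U F"
  unfolding smooth_on_smn
proof (intro allI)
  fix n assume a: "open U" "\<forall>(x,u,p)\<in>U. Dif F x u p" "\<forall>n. smn n U (pdx F)" "\<forall>n. smn n U (pdu F)" "\<forall>n. smn n U (pdp F)"
  show "smn n U F"
  proof (cases n)
    case 0 thus ?thesis using a by (simp add: smn_0)
  next
    case (Suc m) thus ?thesis using a by (auto simp: smn_Suc pdd_def)
  qed
qed


lemma cpartials:
  fixes F Fx Fu Fp :: jfun and X Y Z :: "real set"
  assumes oX: "open X" and oY: "open Y" and oZ: "open Z" and cY: "convex Y" and cZ: "convex Z"
    and dx: "\<And>x u p. x\<in>X \<Longrightarrow> u\<in>Y \<Longrightarrow> p\<in>Z \<Longrightarrow> ((\<lambda>t. F t u p) has_real_derivative Fx x u p) (at x)"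
    and du: "\<And>x u p. x\<in>X \<Longrightarrow> u\<in>Y \<Longrightarrow> p\<in>Z \<Longrightarrow> ((\<lambda>t. F x t p) has_real_derivative Fu x u p) (at u)"
    and dp: "\<And>x u p. x\<in>X \<Longrightarrow> u\<in>Y \<Longrightarrow> p\<in>Z \<Longrightarrow> ((\<lambda>t. F x u t) has_real_derivative Fp x u p) (at p)"
    and cu: "continuous_on (X\<times>Y\<times>Z) (\<lambda>(x,u,p). Fu x u p)"
    and cp: "continuous_on (X\<times>Y\<times>Z) (\<lambda>(x,u,p). Fp x u p)"
    and z: "x\<in>X" "u\<in>Y" "p\<in>Z"
  shows "Dif F x u p"
proof -
  have step1: "((\<lambda>(u,p). F x u p) has_derivative (\<lambda>(hu,hp). Fu x u p * hu + hp * Fp x u p)) (at (u,p))"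
    if xuv: "x\<in>X" "u\<in>Y" "p\<in>Z" for x u p
  proof -
    have fx: "((\<lambda>u. F x u p) has_derivative (*) (Fu x u p)) (at u within Y)"
      using du[OF xuv] unfolding has_field_derivative_def by (rule has_derivative_at_withinI)
    have fy: "((\<lambda>p. F x u p) has_derivative blinfun_apply (blinfun_mult_left (Fp x u p))) (at p within Z)"
      if "u\<in>Y" "p\<in>Z" for u p
    proof -
      have "((\<lambda>p. F x u p) has_derivative (*) (Fp x u p)) (at p)"
        using dp[OF xuv(1) that] unfolding has_field_derivative_def .
      moreover have "(*) (Fp x u p) = blinfun_apply (blinfun_mult_left (Fp x u p))"
        by (auto simp: mult.commute)
      ultimately show ?thesis by (simp add: has_derivative_at_withinI)
    qed
    have c0: "continuous_on (Y\<times>Z) (\<lambda>(u,p). Fp x u p)"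
    proof -
      have sub: "(\<lambda>(u,p). (x,u,p)) ` (Y\<times>Z) \<subseteq> X\<times>Y\<times>Z" using xuv by auto
      have "continuous_on (Y\<times>Z) (\<lambda>(u,p). (x::real,u::real,p::real))"
        by (simp add: split_def, intro continuous_intros)
      from continuous_on_compose[OF this continuous_on_subset[OF cp sub]]
      have "continuous_on (Y\<times>Z) ((\<lambda>(x,u,p). Fp x u p) \<circ> (\<lambda>(u,p). (x,u,p)))" .
      thus ?thesis by (simp add: o_def split_def)
    qed
    have c1: "continuous (at (u,p) within Y\<times>Z) (\<lambda>(u,p). blinfun_mult_left (Fp x u p))"
    proof -
      have "continuous (at (u,p) within Y\<times>Z) (\<lambda>(u,p). Fp x u p)"
        using c0 xuv by (simp add: continuous_on_eq_continuous_within)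
      from bounded_linear.continuous[OF bounded_linear_blinfun_mult_left this]
      show ?thesis by (simp add: split_def)
    qed
    have "((\<lambda>(u, p). F x u p) has_derivative (\<lambda>(tx, ty). Fu x u p * tx + blinfun_apply (blinfun_mult_left (Fp x u p)) ty)) (at (u, p) within Y \<times> Z)"
      by (rule has_derivative_partialsI[where f="\<lambda>u p. F x u p", OF fx fy c1 xuv(3) cZ])
    moreover have "at (u,p) within Y\<times>Z = at (u,p)"
      using xuv by (intro at_within_open) (auto intro: open_Times oY oZ)
    ultimately show ?thesis by simp
  qed
  define B where "B x y = (blinfun_mult_left (Fu x (fst y) (snd y)) o\<^sub>L fst_blinfun)
       + (blinfun_mult_left (Fp x (fst y) (snd y)) o\<^sub>L snd_blinfun)" for x y
  have Bapp: "blinfun_apply (B x (u,p)) = (\<lambda>(hu,hp). Fu x u p * hu + hp * Fp x u p)" for x u p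
    by (auto simp: B_def blinfun.add_left mult.commute)
  have fx2: "((\<lambda>x. (\<lambda>(u,p). F x u p) (u,p)) has_derivative (*) (Fx x u p)) (at x within X)"
    using dx[OF z] unfolding has_field_derivative_def by (simp add: has_derivative_at_withinI)
  have fy2: "((\<lambda>(u,p). F x' u p) has_derivative blinfun_apply (B x' y)) (at y within Y\<times>Z)"
    if "x'\<in>X" "y\<in>Y\<times>Z" for x' y
  proof -
    obtain u' p' where y: "y = (u',p')" by (cases y)
    show ?thesis using step1[of x' u' p'] that y Bapp[of x' u' p'] by (auto intro: has_derivative_at_withinI)
  qed
  have cB: "continuous (at (x,(u,p)) within X\<times>(Y\<times>Z)) (\<lambda>(x,y). B x y)"
  proof -
    have e1: "(\<lambda>(x,y). Fu x (fst y) (snd y)) = (\<lambda>(x,u,p). Fu x u p)" by auto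
    have e2: "(\<lambda>(x,y). Fp x (fst y) (snd y)) = (\<lambda>(x,u,p). Fp x u p)" by auto
    have k1: "continuous (at (x,(u,p)) within X\<times>(Y\<times>Z)) (\<lambda>(x,y). Fu x (fst y) (snd y))"
      unfolding e1 using cu z by (simp add: continuous_on_eq_continuous_within)
    have k2: "continuous (at (x,(u,p)) within X\<times>(Y\<times>Z)) (\<lambda>(x,y). Fp x (fst y) (snd y))"
      unfolding e2 using cp z by (simp add: continuous_on_eq_continuous_within)
    have "continuous (at (x,(u,p)) within X\<times>(Y\<times>Z))
        (\<lambda>z. (blinfun_mult_left ((\<lambda>(x,y). Fu x (fst y) (snd y)) z) o\<^sub>L fst_blinfun)
           + (blinfun_mult_left ((\<lambda>(x,y). Fp x (fst y) (snd y)) z) o\<^sub>L snd_blinfun))"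
      by (intro continuous_add bounded_bilinear.continuous[OF bounded_bilinear_blinfun_compose]
          bounded_linear.continuous[OF bounded_linear_blinfun_mult_left] k1 k2 continuous_const)
    thus ?thesis by (simp add: B_def split_def)
  qed
  have "((\<lambda>(x, y). (\<lambda>(u,p). F x u p) y) has_derivative (\<lambda>(tx, ty). Fx x u p * tx + blinfun_apply (B x (u,p)) ty))
      (at (x, (u,p)) within X \<times> (Y\<times>Z))"
    by (rule has_derivative_partialsI[where f="\<lambda>x y. (\<lambda>(u,p). F x u p) y", OF fx2 fy2 cB])
       (use z cY cZ in \<open>auto intro: convex_Times\<close>)
  moreover have "at (x,(u,p)) within X\<times>(Y\<times>Z) = at (x,(u,p))"
    using z by (intro at_within_open) (auto intro: open_Times oX oY oZ)
  moreover have "(\<lambda>(x, y). (\<lambda>(u,p). F x u p) y) = (\<lambda>(x,u,p). F x u p)" by auto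
  ultimately show ?thesis unfolding Dif_def differentiable_def by auto
qed

lemma leib:
  fixes G Gd :: "real \<Rightarrow> real \<Rightarrow> real"
  assumes S: "open S" "convex S" "y0 \<in> S"
    and d: "\<And>y t. y\<in>S \<Longrightarrow> t\<in>{a..b} \<Longrightarrow> ((\<lambda>y. G y t) has_real_derivative Gd y t) (at y)"
    and cG: "\<And>y. y\<in>S \<Longrightarrow> continuous_on {a..b} (G y)"
    and cGd: "continuous_on (S\<times>{a..b}) (\<lambda>(y,t). Gd y t)"
  shows "((\<lambda>y. integral {a..b} (G y)) has_real_derivative integral {a..b} (Gd y0)) (at y0)"
proof -
  have fx: "((\<lambda>y. G y t) has_derivative blinfun_apply (blinfun_mult_left (Gd y t))) (at y within S)"
    if "y\<in>S" "t\<in>cbox a b" for y t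
  proof -
    have "((\<lambda>y. G y t) has_derivative (*) (Gd y t)) (at y)"
      using d[of y t] that unfolding has_field_derivative_def by auto
    moreover have "(*) (Gd y t) = blinfun_apply (blinfun_mult_left (Gd y t))"
      by (auto simp: mult.commute)
    ultimately show ?thesis by (simp add: has_derivative_at_withinI)
  qed
  have int: "G y integrable_on cbox a b" if "y\<in>S" for y
    using cG[OF that] by (simp add: integrable_continuous_real)
  have cfx: "continuous_on (S \<times> cbox a b) (\<lambda>(y, t). blinfun_mult_left (Gd y t))"
  proof -
    have "continuous_on (S \<times> cbox a b) (\<lambda>z. blinfun_mult_left ((\<lambda>(y, t). Gd y t) z))"
      by (rule bounded_linear.continuous_on[OF bounded_linear_blinfun_mult_left]) (use cGd in simp)
    thus ?thesis by (simp add: split_def)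
  qed
  have L: "((\<lambda>y. integral (cbox a b) (G y)) has_derivative
       blinfun_apply (integral (cbox a b) (\<lambda>t. blinfun_mult_left (Gd y0 t)))) (at y0 within S)"
    by (rule leibniz_rule[OF fx int cfx S(3) S(2)])
  have intd: "Gd y0 integrable_on cbox a b"
  proof -
    have "continuous_on {a..b} (Gd y0)"
    proof -
      have sub: "(\<lambda>t. (y0,t)) ` {a..b} \<subseteq> S\<times>{a..b}" using S(3) by auto
      have "continuous_on {a..b} (\<lambda>t. (y0,t))" by (intro continuous_intros)
      from continuous_on_compose[OF this continuous_on_subset[OF cGd sub]]
      have "continuous_on {a..b} ((\<lambda>(y,t). Gd y t) \<circ> (\<lambda>t. (y0,t)))" .
      thus ?thesis by (simp add: o_def)
    qed
    thus ?thesis by (simp add: integrable_continuous_real)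
  qed
  have "integral (cbox a b) (\<lambda>t. blinfun_mult_left (Gd y0 t)) = blinfun_mult_left (integral (cbox a b) (Gd y0))"
    using integral_linear[OF intd bounded_linear_blinfun_mult_left] by (simp add: o_def)
  hence D: "blinfun_apply (integral (cbox a b) (\<lambda>t. blinfun_mult_left (Gd y0 t))) = (*) (integral (cbox a b) (Gd y0))"
    by (simp add: fun_eq_iff mult.commute)
  have L2: "((\<lambda>y. integral (cbox a b) (G y)) has_derivative (*) (integral (cbox a b) (Gd y0))) (at y0)"
    using L unfolding D at_within_open[OF S(3) S(1)] .
  thus ?thesis unfolding has_field_derivative_def cbox_interval .
qed


lemma cont_of_smooth: "smooth_on U F \<Longrightarrow> continuous_on U (\<lambda>(x,u,p). F x u p)"
proof -
  assume s: "smooth_on U F"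
  show ?thesis
  proof (rule continuous_at_imp_continuous_on, safe)
    fix x u p assume "(x,u,p)\<in>U"
    hence "Dif F x u p" by (rule smooth_Dif[OF s])
    thus "isCont (\<lambda>(x,u,p). F x u p) (x,u,p)" unfolding Dif_def by (rule differentiable_imp_continuous_within)
  qed
qed

lemma cont_comp3:
  assumes "continuous_on U (\<lambda>(x,u,p). F x u p)" "continuous_on S g" "g ` S \<subseteq> U"
  shows "continuous_on S (\<lambda>s. case g s of (x,u,p) \<Rightarrow> F x u p)"
  using continuous_on_compose[OF assms(2) continuous_on_subset[OF assms(1,3)]] by (simp add: o_def)

lemma cont_line_p: "continuous_on U (\<lambda>(x,u,p). F x u p) \<Longrightarrow> (\<And>t. t\<in>T \<Longrightarrow> (x,u,t)\<in>U) \<Longrightarrow> continuous_on T (\<lambda>t. F x u t)"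
proof -
  assume a: "continuous_on U (\<lambda>(x,u,p). F x u p)" "\<And>t. t\<in>T \<Longrightarrow> (x,u,t)\<in>U"
  have "continuous_on T (\<lambda>t. (x,u,t))" by (intro continuous_intros)
  moreover have "(\<lambda>t. (x,u,t)) ` T \<subseteq> U" using a(2) by auto
  ultimately show ?thesis using cont_comp3[OF a(1)] by fastforce
qed

lemma cont_line_u: "continuous_on U (\<lambda>(x,u,p). F x u p) \<Longrightarrow> (\<And>t. t\<in>T \<Longrightarrow> (x,t,c)\<in>U) \<Longrightarrow> continuous_on T (\<lambda>t. F x t c)"
proof -
  assume a: "continuous_on U (\<lambda>(x,u,p). F x u p)" "\<And>t. t\<in>T \<Longrightarrow> (x,t,c)\<in>U"
  have "continuous_on T (\<lambda>t. (x,t,c))" by (intro continuous_intros)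
  moreover have "(\<lambda>t. (x,t,c)) ` T \<subseteq> U" using a(2) by auto
  ultimately show ?thesis using cont_comp3[OF a(1)] by fastforce
qed

lemma cont_line_x: "continuous_on U (\<lambda>(x,u,p). F x u p) \<Longrightarrow> (\<And>t. t\<in>T \<Longrightarrow> (t,c,d)\<in>U) \<Longrightarrow> continuous_on T (\<lambda>t. F t c d)"
proof -
  assume a: "continuous_on U (\<lambda>(x,u,p). F x u p)" "\<And>t. t\<in>T \<Longrightarrow> (t,c,d)\<in>U"
  have "continuous_on T (\<lambda>t. (t,c,d))" by (intro continuous_intros)
  moreover have "(\<lambda>t. (t,c,d)) ` T \<subseteq> U" using a(2) by auto
  ultimately show ?thesis using cont_comp3[OF a(1)] by fastforce
qed

lemma cont_plane_ut: "continuous_on U (\<lambda>(x,u,p). F x u p) \<Longrightarrow> (\<And>s t. s\<in>S \<Longrightarrow> t\<in>T \<Longrightarrow> (x,s,t)\<in>U) \<Longrightarrow>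
   continuous_on (S\<times>T) (\<lambda>(s,t). F x s t)"
proof -
  assume a: "continuous_on U (\<lambda>(x,u,p). F x u p)" "\<And>s t. s\<in>S \<Longrightarrow> t\<in>T \<Longrightarrow> (x,s,t)\<in>U"
  have "continuous_on (S\<times>T) (\<lambda>z. (x, fst z, snd z))" by (intro continuous_intros)
  moreover have "(\<lambda>z. (x, fst z, snd z)) ` (S\<times>T) \<subseteq> U" using a(2) by auto
  ultimately have "continuous_on (S\<times>T) (\<lambda>z. case (x, fst z, snd z) of (x,u,p) \<Rightarrow> F x u p)"
    using cont_comp3[OF a(1)] by blast
  thus ?thesis by (simp add: split_def)
qed

lemma cont_plane_xt: "continuous_on U (\<lambda>(x,u,p). F x u p) \<Longrightarrow> (\<And>s t. s\<in>S \<Longrightarrow> t\<in>T \<Longrightarrow> (s,u,t)\<in>U) \<Longrightarrow>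
   continuous_on (S\<times>T) (\<lambda>(s,t). F s u t)"
proof -
  assume a: "continuous_on U (\<lambda>(x,u,p). F x u p)" "\<And>s t. s\<in>S \<Longrightarrow> t\<in>T \<Longrightarrow> (s,u,t)\<in>U"
  have "continuous_on (S\<times>T) (\<lambda>z. (fst z, u, snd z))" by (intro continuous_intros)
  moreover have "(\<lambda>z. (fst z, u, snd z)) ` (S\<times>T) \<subseteq> U" using a(2) by auto
  ultimately have "continuous_on (S\<times>T) (\<lambda>z. case (fst z, u, snd z) of (x,u,p) \<Rightarrow> F x u p)"
    using cont_comp3[OF a(1)] by blast
  thus ?thesis by (simp add: split_def)
qed

lemma cont_plane_xu: "continuous_on U (\<lambda>(x,u,p). F x u p) \<Longrightarrow> (\<And>s t. s\<in>S \<Longrightarrow> t\<in>T \<Longrightarrow> (s,t,c)\<in>U) \<Longrightarrow>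
   continuous_on (S\<times>T) (\<lambda>(s,t). F s t c)"
proof -
  assume a: "continuous_on U (\<lambda>(x,u,p). F x u p)" "\<And>s t. s\<in>S \<Longrightarrow> t\<in>T \<Longrightarrow> (s,t,c)\<in>U"
  have "continuous_on (S\<times>T) (\<lambda>z. (fst z, snd z, c))" by (intro continuous_intros)
  moreover have "(\<lambda>z. (fst z, snd z, c)) ` (S\<times>T) \<subseteq> U" using a(2) by auto
  ultimately have "continuous_on (S\<times>T) (\<lambda>z. case (fst z, snd z, c) of (x,u,p) \<Rightarrow> F x u p)"
    using cont_comp3[OF a(1)] by blast
  thus ?thesis by (simp add: split_def)
qed

lemma ftc_int:
  fixes f f' :: "real \<Rightarrow> real"
  assumes "a \<le> b" "\<And>t. t\<in>{a..b} \<Longrightarrow> (f has_real_derivative f' t) (at t)"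
  shows "integral {a..b} f' = f b - f a"
proof -
  have "(f' has_integral (f b - f a)) {a..b}"
    by (rule fundamental_theorem_of_calculus[OF assms(1)])
       (use assms(2) in \<open>auto simp: has_real_derivative_iff_has_vector_derivative intro: has_vector_derivative_at_within\<close>)
  thus ?thesis by (rule integral_unique)
qed

lemma ftc_upper:
  fixes g :: "real \<Rightarrow> real"
  assumes "continuous_on {a..b} g" "a < t" "t < b"
  shows "((\<lambda>x. integral {a..x} g) has_real_derivative g t) (at t)"
proof -
  have "((\<lambda>x. integral {a..x} g) has_real_derivative g t) (at t within {a..b})"
    by (rule integral_has_real_derivative[OF assms(1)]) (use assms in auto)
  thus ?thesis using at_within_Icc_at[OF assms(2,3)] by simp
qed


lemma poincare_box:
  fixes P Q R :: jfun
  assumes oU: "open U" and sP: "smooth_on U P" and sQ: "smooth_on U Q" and sR: "smooth_on U R"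
    and cl: "\<forall>(x,u,p)\<in>U. pdu P x u p = pdx Q x u p \<and> pdp P x u p = pdx R x u p \<and> pdp Q x u p = pdu R x u p"
    and e: "e > 0"
    and box: "{x0-e..x0+e} \<times> {u0-e..u0+e} \<times> {p0-e..p0+e} \<subseteq> U"
  shows "\<exists>I. smooth_on ({x0-e<..<x0+e} \<times> {u0-e<..<u0+e} \<times> {p0-e<..<p0+e}) I \<and>
     (\<forall>(x,u,p)\<in>{x0-e<..<x0+e} \<times> {u0-e<..<u0+e} \<times> {p0-e<..<p0+e}.
        pdx I x u p = P x u p \<and> pdu I x u p = Q x u p \<and> pdp I x u p = R x u p)"
proof -
  define a1 where "a1 = x0 - e"
  define a2 where "a2 = u0 - e"
  define a3 where "a3 = p0 - e"
  define X where "X = {x0-e<..<x0+e}"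
  define Y where "Y = {u0-e<..<u0+e}"
  define Z where "Z = {p0-e<..<p0+e}"
  define V where "V = X \<times> Y \<times> Z"
  have oV: "open V" unfolding V_def X_def Y_def Z_def by (intro open_Times) auto
  have inU: "(x,u,p)\<in>U" if "x0-e \<le> x" "x \<le> x0+e" "u0-e \<le> u" "u \<le> u0+e" "p0-e \<le> p" "p \<le> p0+e" for x u p
    using box that by auto
  have VU: "V \<subseteq> U" unfolding V_def X_def Y_def Z_def using inU by fastforce
  have cP: "continuous_on U (\<lambda>(x,u,p). P x u p)" by (rule cont_of_smooth[OF sP])
  have cQ: "continuous_on U (\<lambda>(x,u,p). Q x u p)" by (rule cont_of_smooth[OF sQ])
  have cR: "continuous_on U (\<lambda>(x,u,p). R x u p)" by (rule cont_of_smooth[OF sR])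
  have cRu: "continuous_on U (\<lambda>(x,u,p). pdu R x u p)" by (rule cont_of_smooth[OF smooth_pdu[OF sR]])
  have cRx: "continuous_on U (\<lambda>(x,u,p). pdx R x u p)" by (rule cont_of_smooth[OF smooth_pdx[OF sR]])
  have cQx: "continuous_on U (\<lambda>(x,u,p). pdx Q x u p)" by (rule cont_of_smooth[OF smooth_pdx[OF sQ]])
  have DP: "Dif P x u p" "Dif Q x u p" "Dif R x u p" if "(x,u,p)\<in>U" for x u p
    using smooth_Dif[OF sP that] smooth_Dif[OF sQ that] smooth_Dif[OF sR that] by auto
  have clU: "pdu P x u p = pdx Q x u p" "pdp P x u p = pdx R x u p" "pdp Q x u p = pdu R x u p"
    if "(x,u,p)\<in>U" for x u p using cl that by auto
  define I where "I x u p = integral {a3..p} (\<lambda>t. R x u t) + integral {a2..u} (\<lambda>s. Q x s a3)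
      + integral {a1..x} (\<lambda>r. P r a2 a3)" for x u p
  have memX: "x0-e < x" "x < x0+e" if "x\<in>X" for x using that unfolding X_def by auto
  have memY: "u0-e < u" "u < u0+e" if "u\<in>Y" for u using that unfolding Y_def by auto
  have memZ: "p0-e < p" "p < p0+e" if "p\<in>Z" for p using that unfolding Z_def by auto

  have DPp: "((\<lambda>t. I x u t) has_real_derivative R x u p) (at p)" if "x\<in>X" "u\<in>Y" "p\<in>Z" for x u p
  proof -
    note m = memX[OF that(1)] memY[OF that(2)] memZ[OF that(3)]
    have c: "continuous_on {a3..p0+e} (\<lambda>t. R x u t)"
      by (rule cont_line_p[OF cR]) (rule inU, use m in \<open>auto simp: a3_def\<close>)
    have h1: "((\<lambda>t. integral {a3..t} (\<lambda>t. R x u t)) has_real_derivative R x u p) (at p)"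
      by (rule ftc_upper[OF c]) (use m in \<open>auto simp: a3_def\<close>)
    have eq: "(\<lambda>t. I x u t) = (\<lambda>t. integral {a3..t} (\<lambda>t. R x u t) + (integral {a2..u} (\<lambda>s. Q x s a3)
      + integral {a1..x} (\<lambda>r. P r a2 a3)))" by (simp add: I_def fun_eq_iff)
    show ?thesis unfolding eq using DERIV_add[OF h1 DERIV_const] by simp
  qed

  have DPu: "((\<lambda>t. I x t p) has_real_derivative Q x u p) (at u)" if "x\<in>X" "u\<in>Y" "p\<in>Z" for x u p
  proof -
    note m = memX[OF that(1)] memY[OF that(2)] memZ[OF that(3)]
    have h1: "((\<lambda>s. integral {a3..p} (\<lambda>t. R x s t)) has_real_derivative integral {a3..p} (\<lambda>t. pdu R x u t)) (at u)"
    proof (rule leib[where G="\<lambda>s t. R x s t" and Gd="\<lambda>s t. pdu R x s t" and S=Y])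
      show "open Y" "convex Y" "u \<in> Y" using that(2) by (auto simp: Y_def)
      show "((\<lambda>y. R x y t) has_real_derivative pdu R x y t) (at y)" if "y\<in>Y" "t\<in>{a3..p}" for y t
        using memY[OF that(1)] that(2) m by (intro Dif_pdu DP(3) inU) (auto simp: a3_def)
      show "continuous_on {a3..p} (\<lambda>t. R x y t)" if "y\<in>Y" for y
        using memY[OF that] m by (intro cont_line_p[OF cR] inU) (auto simp: a3_def)
      show "continuous_on (Y \<times> {a3..p}) (\<lambda>(s, t). pdu R x s t)"
        using m by (intro cont_plane_ut[OF cRu] inU) (auto simp: a3_def Y_def)
    qed
    have h1': "integral {a3..p} (\<lambda>t. pdu R x u t) = Q x u p - Q x u a3"
    proof -
      have "integral {a3..p} (\<lambda>t. pdu R x u t) = integral {a3..p} (\<lambda>t. pdp Q x u t)"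
        using m by (intro integral_cong clU(3)[symmetric] inU) (auto simp: a3_def)
      also have "\<dots> = Q x u p - Q x u a3"
        using m by (intro ftc_int Dif_pdp DP(2) inU) (auto simp: a3_def)
      finally show ?thesis .
    qed
    have c2: "continuous_on {a2..u0+e} (\<lambda>s. Q x s a3)"
      using m by (intro cont_line_u[OF cQ] inU) (auto simp: a2_def a3_def)
    have h2: "((\<lambda>s. integral {a2..s} (\<lambda>s. Q x s a3)) has_real_derivative Q x u a3) (at u)"
      by (rule ftc_upper[OF c2]) (use m in \<open>auto simp: a2_def\<close>)
    have eq: "(\<lambda>t. I x t p) = (\<lambda>s. integral {a3..p} (\<lambda>t. R x s t) + integral {a2..s} (\<lambda>s. Q x s a3)
      + integral {a1..x} (\<lambda>r. P r a2 a3))" by (simp add: I_def fun_eq_iff)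
    show ?thesis unfolding eq using DERIV_add[OF DERIV_add[OF h1 h2] DERIV_const] h1' by simp
  qed

  have DPx: "((\<lambda>t. I t u p) has_real_derivative P x u p) (at x)" if "x\<in>X" "u\<in>Y" "p\<in>Z" for x u p
  proof -
    note m = memX[OF that(1)] memY[OF that(2)] memZ[OF that(3)]
    have h1: "((\<lambda>r. integral {a3..p} (\<lambda>t. R r u t)) has_real_derivative integral {a3..p} (\<lambda>t. pdx R x u t)) (at x)"
    proof (rule leib[where G="\<lambda>r t. R r u t" and Gd="\<lambda>r t. pdx R r u t" and S=X])
      show "open X" "convex X" "x \<in> X" using that(1) by (auto simp: X_def)
      show "((\<lambda>y. R y u t) has_real_derivative pdx R y u t) (at y)" if "y\<in>X" "t\<in>{a3..p}" for y t
        using memX[OF that(1)] that(2) m by (intro Dif_pdx DP(3) inU) (auto simp: a3_def)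
      show "continuous_on {a3..p} (\<lambda>t. R y u t)" if "y\<in>X" for y
        using memX[OF that] m by (intro cont_line_p[OF cR] inU) (auto simp: a3_def)
      show "continuous_on (X \<times> {a3..p}) (\<lambda>(s, t). pdx R s u t)"
        using m by (intro cont_plane_xt[OF cRx] inU) (auto simp: a3_def X_def)
    qed
    have h1': "integral {a3..p} (\<lambda>t. pdx R x u t) = P x u p - P x u a3"
    proof -
      have "integral {a3..p} (\<lambda>t. pdx R x u t) = integral {a3..p} (\<lambda>t. pdp P x u t)"
        using m by (intro integral_cong clU(2)[symmetric] inU) (auto simp: a3_def)
      also have "\<dots> = P x u p - P x u a3"
        using m by (intro ftc_int Dif_pdp DP(1) inU) (auto simp: a3_def)
      finally show ?thesis .
    qed
    have h2: "((\<lambda>r. integral {a2..u} (\<lambda>s. Q r s a3)) has_real_derivative integral {a2..u} (\<lambda>s. pdx Q x s a3)) (at x)"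
    proof (rule leib[where G="\<lambda>r s. Q r s a3" and Gd="\<lambda>r s. pdx Q r s a3" and S=X])
      show "open X" "convex X" "x \<in> X" using that(1) by (auto simp: X_def)
      show "((\<lambda>y. Q y s a3) has_real_derivative pdx Q y s a3) (at y)" if "y\<in>X" "s\<in>{a2..u}" for y s
        using memX[OF that(1)] that(2) m e by (intro Dif_pdx DP(2) inU) (auto simp: a2_def a3_def)
      show "continuous_on {a2..u} (\<lambda>s. Q y s a3)" if "y\<in>X" for y
        using memX[OF that] m e by (intro cont_line_u[OF cQ] inU) (auto simp: a2_def a3_def)
      show "continuous_on (X \<times> {a2..u}) (\<lambda>(r, s). pdx Q r s a3)"
        using m e by (intro cont_plane_xu[OF cQx] inU) (auto simp: a2_def a3_def X_def)
    qed
    have h2': "integral {a2..u} (\<lambda>s. pdx Q x s a3) = P x u a3 - P x a2 a3"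
    proof -
      have "integral {a2..u} (\<lambda>s. pdx Q x s a3) = integral {a2..u} (\<lambda>s. pdu P x s a3)"
        using m e by (intro integral_cong clU(1)[symmetric] inU) (auto simp: a2_def a3_def)
      also have "\<dots> = P x u a3 - P x a2 a3"
        using m e by (intro ftc_int Dif_pdu DP(1) inU) (auto simp: a2_def a3_def)
      finally show ?thesis .
    qed
    have c3: "continuous_on {a1..x0+e} (\<lambda>r. P r a2 a3)"
      using m e by (intro cont_line_x[OF cP] inU) (auto simp: a1_def a2_def a3_def)
    have h3: "((\<lambda>r. integral {a1..r} (\<lambda>r. P r a2 a3)) has_real_derivative P x a2 a3) (at x)"
      by (rule ftc_upper[OF c3]) (use m in \<open>auto simp: a1_def\<close>)
    have eq: "(\<lambda>t. I t u p) = (\<lambda>r. integral {a3..p} (\<lambda>t. R r u t) + integral {a2..u} (\<lambda>s. Q r s a3)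
      + integral {a1..r} (\<lambda>r. P r a2 a3))" by (simp add: I_def fun_eq_iff)
    show ?thesis unfolding eq using DERIV_add[OF DERIV_add[OF h1 h2] h3] h1' h2' by simp
  qed

  have DifI: "Dif I x u p" if "(x,u,p)\<in>V" for x u p
  proof -
    have z: "x\<in>X" "u\<in>Y" "p\<in>Z" using that unfolding V_def by auto
    show ?thesis
    proof (rule cpartials[where X=X and Y=Y and Z=Z and Fx=P and Fu=Q and Fp=R, OF _ _ _ _ _ DPx DPu DPp _ _ z])
      show "open X" "open Y" "open Z" "convex Y" "convex Z" by (auto simp: X_def Y_def Z_def)
      show "continuous_on (X \<times> Y \<times> Z) (\<lambda>(x, u, p). Q x u p)"
        using continuous_on_subset[OF cQ VU] by (simp add: V_def)
      show "continuous_on (X \<times> Y \<times> Z) (\<lambda>(x, u, p). R x u p)"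
        using continuous_on_subset[OF cR VU] by (simp add: V_def)
    qed
  qed
  have pI: "pdx I x u p = P x u p \<and> pdu I x u p = Q x u p \<and> pdp I x u p = R x u p" if "(x,u,p)\<in>V" for x u p
  proof -
    have z: "x\<in>X" "u\<in>Y" "p\<in>Z" using that unfolding V_def by auto
    show ?thesis using pdx_eq[where F=I, OF DPx[OF z]] pdu_eq[where F=I, OF DPu[OF z]] pdp_eq[where F=I, OF DPp[OF z]] by simp
  qed
  have "smooth_on V I"
  proof (rule smooth_intro[OF oV])
    show "\<forall>(x,u,p)\<in>V. Dif I x u p" using DifI by auto
    show "smooth_on V (pdx I)"
      by (rule smooth_local[OF oV _ smooth_subset[OF VU sP]]) (use pI in auto)
    show "smooth_on V (pdu I)"
      by (rule smooth_local[OF oV _ smooth_subset[OF VU sQ]]) (use pI in auto)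
    show "smooth_on V (pdp I)"
      by (rule smooth_local[OF oV _ smooth_subset[OF VU sR]]) (use pI in auto)
  qed
  thus ?thesis using pI unfolding V_def X_def Y_def Z_def by blast
qed


lemma alg_closed:
  fixes f g l l' ph p fx fu fp gx gu gp lx lu lp Lx Lu Lp phu php m mx mu mp :: real
  assumes nz: "f \<noteq> 0" "g \<noteq> 0" "l' \<noteq> l"
    and Hfu: "(fu + l*fp)/f = ((Lu + l*Lp) - (lu + l'*lp))/(l - l')"
    and Hgu: "gu + l*gp = 0"
    and Hgx: "gx + p*gu + ph*gp = (l' - (fx + p*fu + ph*fp)/f)*g"
    and Hlx: "lx + p*lu + ph*lp = phu + l*php - l*l"
    and HLx: "Lx + p*Lu + ph*Lp = phu + l'*php - l'*l'"
    and Hm: "m = 1/(f*g*(l'-l))"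
    and Hmx: "mx = -(((f*g)*(Lx - lx) + (f*gx + fx*g)*(l'-l))/(f*g*(l'-l))^2)"
    and Hmu: "mu = -(((f*g)*(Lu - lu) + (f*gu + fu*g)*(l'-l))/(f*g*(l'-l))^2)"
    and Hmp: "mp = -(((f*g)*(Lp - lp) + (f*gp + fp*g)*(l'-l))/(f*g*(l'-l))^2)"
  shows "mu*(l*p - ph) + m*(lu*p - phu) = -(lx*m + l*mx)"
    and "mp*(l*p - ph) + m*(lp*p + l - php) = mx"
    and "-(lp*m + l*mp) = mu"
proof -
  define d where "d = l' - l"
  have L': "l' = l + d" by (simp add: d_def)
  have d: "d \<noteq> 0" using nz(3) by (simp add: d_def)
  have fu: "fu = f*((Lu + l*Lp) - (lu + (l+d)*lp))/(-d) - l*fp"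
    using Hfu nz d unfolding L' by (simp add: field_simps)
  have gu: "gu = - l*gp" using Hgu by simp
  have gx: "gx = (l + d - (fx + p*fu + ph*fp)/f)*g - p*gu - ph*gp" using Hgx unfolding L' by simp
  have lx: "lx = phu + l*php - l*l - p*lu - ph*lp" using Hlx by simp
  have Lx: "Lx = phu + (l+d)*php - (l+d)*(l+d) - p*Lu - ph*Lp" using HLx unfolding L' by simp
  have m: "m = 1/(f*g*d)" using Hm unfolding L' by simp
  have mx: "mx = -(((f*g)*(Lx - lx) + (f*gx + fx*g)*d)/(f*g*d)^2)" using Hmx unfolding L' by simp
  have mu: "mu = -(((f*g)*(Lu - lu) + (f*gu + fu*g)*d)/(f*g*d)^2)" using Hmu unfolding L' by simp
  have mp: "mp = -(((f*g)*(Lp - lp) + (f*gp + fp*g)*d)/(f*g*d)^2)" using Hmp unfolding L' by simp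
  show "mu*(l*p - ph) + m*(lu*p - phu) = -(lx*m + l*mx)"
    unfolding mu m mx gx gu fu lx Lx using nz d by (simp add: field_simps power2_eq_square)
  show "mp*(l*p - ph) + m*(lp*p + l - php) = mx"
    unfolding mp m mx gx gu fu lx Lx using nz d by (simp add: field_simps power2_eq_square)
  show "-(lp*m + l*mp) = mu"
    unfolding mp m mu gu fu using nz d by (simp add: field_simps power2_eq_square)
qed


lemma inv_deriv:
  fixes Df :: "real \<Rightarrow> real"
  assumes "(Df has_real_derivative d) (at x)" "Df x \<noteq> 0"
  shows "((\<lambda>t. 1 / Df t) has_real_derivative - (d / (Df x)^2)) (at x)"
proof -
  have "((\<lambda>t. inverse (Df t)) has_real_derivative - (d * inverse (Df x ^ Suc (Suc 0)))) (at x)"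
    by (rule DERIV_inverse_fun[OF assms])
  thus ?thesis by (simp add: inverse_eq_divide power2_eq_square)
qed

lemma closed_pt:
  fixes phi l l' f g mu :: jfun
  assumes mu: "mu = (\<lambda>x u p. 1 / (f x u p * g x u p * (l' x u p - l x u p)))"
  assumes D: "Dif phi x u p" "Dif l x u p" "Dif l' x u p" "Dif f x u p" "Dif g x u p"
    and nz: "f x u p \<noteq> 0" "g x u p \<noteq> 0" "l' x u p - l x u p \<noteq> 0"
    and S1: "pdx l x u p + p * pdu l x u p + phi x u p * pdp l x u p = pdu phi x u p + l x u p * pdp phi x u p - l x u p * l x u p"
    and S2: "pdx l' x u p + p * pdu l' x u p + phi x u p * pdp l' x u p = pdu phi x u p + l' x u p * pdp phi x u p - l' x u p * l' x u p"
    and HF: "(pdu f x u p + l x u p * pdp f x u p) / f x u p =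
         ((pdu l' x u p + l x u p * pdp l' x u p) - (pdu l x u p + l' x u p * pdp l x u p)) / (l x u p - l' x u p)"
    and HG1: "pdu g x u p + l x u p * pdp g x u p = 0"
    and HG2: "pdx g x u p + p * pdu g x u p + phi x u p * pdp g x u p =
         (l' x u p - (pdx f x u p + p * pdu f x u p + phi x u p * pdp f x u p) / f x u p) * g x u p"
  shows "pdu (\<lambda>x u p. mu x u p * (l x u p * p - phi x u p)) x u p
           = pdx (\<lambda>x u p. - l x u p * mu x u p) x u p"
    and "pdp (\<lambda>x u p. mu x u p * (l x u p * p - phi x u p)) x u p
           = pdx mu x u p"
    and "pdp (\<lambda>x u p. - l x u p * mu x u p) x u p
           = pdu mu x u p"
proof -
  have nz3: "l x u p \<noteq> l' x u p" "l' x u p \<noteq> l x u p" using nz by auto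
  have Dmu: "Dif mu x u p" unfolding mu
    by (intro Dif_divide Dif_mult Dif_diff Dif_const D) (use nz in auto)
  have Dv: "f x u p * g x u p * (l' x u p - l x u p) \<noteq> 0" using nz by simp
  have mux: "pdx mu x u p = - (((f x u p * g x u p) * (pdx l' x u p - pdx l x u p) + (f x u p * pdx g x u p + pdx f x u p * g x u p) * (l' x u p - l x u p))
      / (f x u p * g x u p * (l' x u p - l x u p))^2)"
    unfolding mu
    apply (rule pdx_eq)
    apply (rule inv_deriv[where Df="\<lambda>t. f t u p * g t u p * (l' t u p - l t u p)"])
     apply (rule DERIV_mult'[OF DERIV_mult' DERIV_diff]; intro Dif_pdx D)
    apply (simp add: nz nz3)
    done
  have muu: "pdu mu x u p = - (((f x u p * g x u p) * (pdu l' x u p - pdu l x u p) + (f x u p * pdu g x u p + pdu f x u p * g x u p) * (l' x u p - l x u p))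
      / (f x u p * g x u p * (l' x u p - l x u p))^2)"
    unfolding mu
    apply (rule pdu_eq)
    apply (rule inv_deriv[where Df="\<lambda>t. f x t p * g x t p * (l' x t p - l x t p)"])
     apply (rule DERIV_mult'[OF DERIV_mult' DERIV_diff]; intro Dif_pdu D)
    apply (simp add: nz nz3)
    done
  have mup: "pdp mu x u p = - (((f x u p * g x u p) * (pdp l' x u p - pdp l x u p) + (f x u p * pdp g x u p + pdp f x u p * g x u p) * (l' x u p - l x u p))
      / (f x u p * g x u p * (l' x u p - l x u p))^2)"
    unfolding mu
    apply (rule pdp_eq)
    apply (rule inv_deriv[where Df="\<lambda>t. f x u t * g x u t * (l' x u t - l x u t)"])
     apply (rule DERIV_mult'[OF DERIV_mult' DERIV_diff]; intro Dif_pdp D)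
    apply (simp add: nz nz3)
    done
  have muv: "mu x u p = 1 / (f x u p * g x u p * (l' x u p - l x u p))" by (simp add: mu)
  note alg = alg_closed[OF nz(1,2) nz3(2) HF HG1 HG2 S1 S2 muv mux muu mup]
  have e1: "pdu (\<lambda>x u p. mu x u p * (l x u p * p - phi x u p)) x u p
     = pdu mu x u p * (l x u p * p - phi x u p) + mu x u p * (pdu l x u p * p - pdu phi x u p)"
    using D Dmu by simp
  have e2: "pdx (\<lambda>x u p. - l x u p * mu x u p) x u p = -(pdx l x u p * mu x u p + l x u p * pdx mu x u p)"
    using D Dmu by simp
  have e3: "pdp (\<lambda>x u p. mu x u p * (l x u p * p - phi x u p)) x u p
     = pdp mu x u p * (l x u p * p - phi x u p) + mu x u p * (pdp l x u p * p + l x u p - pdp phi x u p)"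
    using D Dmu by simp
  have e4: "pdp (\<lambda>x u p. - l x u p * mu x u p) x u p = -(pdp l x u p * mu x u p + l x u p * pdp mu x u p)"
    using D Dmu by simp
  show "pdu (\<lambda>x u p. mu x u p * (l x u p * p - phi x u p)) x u p = pdx (\<lambda>x u p. - l x u p * mu x u p) x u p"
    unfolding e1 e2 by (rule alg(1))
  show "pdp (\<lambda>x u p. mu x u p * (l x u p * p - phi x u p)) x u p = pdx mu x u p"
    unfolding e3 by (rule alg(2))
  show "pdp (\<lambda>x u p. - l x u p * mu x u p) x u p = pdu mu x u p"
    unfolding e4 by (rule alg(3))
qed


lemma jac_alg:
  fixes f1 g1 f2 g2 l1 l2 ph p php phu f1x f1u f1p g1x g1u g1p f2x f2u f2p g2x g2u g2p
    l1x l1u l1p l2x l2u l2p M Mx Mu Mp :: real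
  assumes nz: "f1 \<noteq> 0" "g1 \<noteq> 0" "f2 \<noteq> 0" "g2 \<noteq> 0" "l2 \<noteq> l1"
    and Hg1: "g1x + p*g1u + ph*g1p = (l1 - (f1x + p*f1u + ph*f1p)/f1)*g1"
    and Hg2: "g2x + p*g2u + ph*g2p = (l2 - (f2x + p*f2u + ph*f2p)/f2)*g2"
    and S1: "l1x + p*l1u + ph*l1p = phu + l1*php - l1*l1"
    and S2: "l2x + p*l2u + ph*l2p = phu + l2*php - l2*l2"
    and HM: "M = 1/(f1*g1*f2*g2*(l2-l1))"
    and HMx: "Mx = -(((f1*g1*f2*g2)*(l2x - l1x) + ((f1*g1*f2)*g2x + ((f1*g1)*f2x + (f1*g1x + f1x*g1)*f2)*g2)*(l2-l1))
        / (f1*g1*f2*g2*(l2-l1))^2)"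
    and HMu: "Mu = -(((f1*g1*f2*g2)*(l2u - l1u) + ((f1*g1*f2)*g2u + ((f1*g1)*f2u + (f1*g1u + f1u*g1)*f2)*g2)*(l2-l1))
        / (f1*g1*f2*g2*(l2-l1))^2)"
    and HMp: "Mp = -(((f1*g1*f2*g2)*(l2p - l1p) + ((f1*g1*f2)*g2p + ((f1*g1)*f2p + (f1*g1p + f1p*g1)*f2)*g2)*(l2-l1))
        / (f1*g1*f2*g2*(l2-l1))^2)"
  shows "1*Mx + p*Mu + ph*Mp + M*php = 0"
proof -
  define d where "d = l2 - l1"
  have L: "l2 = l1 + d" by (simp add: d_def)
  have d: "d \<noteq> 0" using nz(5) by (simp add: d_def)
  have g1x: "g1x = (l1 - (f1x + p*f1u + ph*f1p)/f1)*g1 - p*g1u - ph*g1p" using Hg1 by simp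
  have g2x: "g2x = (l1 + d - (f2x + p*f2u + ph*f2p)/f2)*g2 - p*g2u - ph*g2p" using Hg2 unfolding L by simp
  have l1x: "l1x = phu + l1*php - l1*l1 - p*l1u - ph*l1p" using S1 by simp
  have l2x: "l2x = phu + (l1+d)*php - (l1+d)*(l1+d) - p*l2u - ph*l2p" using S2 unfolding L by simp
  show ?thesis
    unfolding HM HMx HMu HMp g1x g2x l1x l2x L using nz d by (simp add: field_simps power2_eq_square)
qed

lemma sym_eq:
  assumes "gen_Cinf_symmetry U phi (\<lambda>x u p. 0) (\<lambda>x u p. 1) lam" "(x,u,p)\<in>U"
  shows "pdx lam x u p + p * pdu lam x u p + phi x u p * pdp lam x u p
     = pdu phi x u p + lam x u p * pdp phi x u p - lam x u p * lam x u p"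
  using assms
  by (auto simp: gen_Cinf_symmetry_def vf_eq_on_def lie_bracket_def lam_prol_def Aplus_def Avf_def vf_apply_def Let_def)


lemma dist2_le: "dist (a::'a::metric_space, b::'b::metric_space) (c, d) \<le> dist a c + dist b d"
proof -
  have "dist (a,b) (c,d) = sqrt ((dist a c)\<^sup>2 + (dist b d)\<^sup>2)" by (rule dist_Pair_Pair)
  also have "\<dots> \<le> \<bar>dist a c\<bar> + \<bar>dist b d\<bar>" by (rule sqrt_sum_squares_le_sum_abs)
  finally show ?thesis by simp
qed

lemma box_in_open:
  fixes U :: "(real\<times>real\<times>real) set"
  assumes "open U" "(x0,u0,p0)\<in>U"
  shows "\<exists>e>0. {x0-e..x0+e} \<times> {u0-e..u0+e} \<times> {p0-e..p0+e} \<subseteq> U"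
proof -
  obtain r where r: "r > 0" "ball (x0,u0,p0) r \<subseteq> U" using assms open_contains_ball by blast
  have "{x0-r/4..x0+r/4} \<times> {u0-r/4..u0+r/4} \<times> {p0-r/4..p0+r/4} \<subseteq> U"
  proof (safe)
    fix x u p assume a: "x \<in> {x0-r/4..x0+r/4}" "u \<in> {u0-r/4..u0+r/4}" "p \<in> {p0-r/4..p0+r/4}"
    have "dist (x0,u0,p0) (x,u,p) \<le> dist x0 x + dist (u0,p0) (u,p)" by (rule dist2_le)
    also have "\<dots> \<le> dist x0 x + (dist u0 u + dist p0 p)" using dist2_le[of u0 p0 u p] by simp
    also have "\<dots> < r" using a r(1) by (auto simp: dist_real_def abs_if)
    finally have "(x,u,p) \<in> ball (x0,u0,p0) r" by simp
    thus "(x,u,p)\<in>U" using r(2) by blast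
  qed
  thus ?thesis using r(1) by (intro exI[of _ "r/4"]) auto
qed

lemma poincare_local:
  fixes P Q R :: jfun
  assumes oU: "open U" and z0: "(x0,u0,p0)\<in>U" and sP: "smooth_on U P" and sQ: "smooth_on U Q" and sR: "smooth_on U R"
    and cl: "\<forall>(x,u,p)\<in>U. pdu P x u p = pdx Q x u p \<and> pdp P x u p = pdx R x u p \<and> pdp Q x u p = pdu R x u p"
  shows "\<exists>V. open V \<and> (x0,u0,p0)\<in>V \<and> V \<subseteq> U \<and> (\<exists>I. smooth_on V I \<and>
     (\<forall>(x,u,p)\<in>V. pdx I x u p = P x u p \<and> pdu I x u p = Q x u p \<and> pdp I x u p = R x u p))"
proof -
  obtain e where e: "e > 0" and box: "{x0-e..x0+e} \<times> {u0-e..u0+e} \<times> {p0-e..p0+e} \<subseteq> U"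
    using box_in_open[OF oU z0] by blast
  define V where "V = {x0-e<..<x0+e} \<times> {u0-e<..<u0+e} \<times> {p0-e<..<p0+e}"
  have "open V" unfolding V_def by (intro open_Times) auto
  moreover have "(x0,u0,p0)\<in>V" using e unfolding V_def by auto
  moreover have "V \<subseteq> U" using box unfolding V_def by fastforce
  moreover have "\<exists>I. smooth_on V I \<and> (\<forall>(x,u,p)\<in>V. pdx I x u p = P x u p \<and> pdu I x u p = Q x u p \<and> pdp I x u p = R x u p)"
    unfolding V_def by (rule poincare_box[OF oU sP sQ sR cl e box])
  ultimately show ?thesis by blast
qed

lemma jac_pt:
  fixes phi l1 l2 f1 g1 f2 g2 M :: jfun
  assumes M: "M = (\<lambda>x u p. 1 / (f1 x u p * g1 x u p * f2 x u p * g2 x u p * (l2 x u p - l1 x u p)))"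
    and D: "Dif phi x u p" "Dif l1 x u p" "Dif l2 x u p" "Dif f1 x u p" "Dif g1 x u p" "Dif f2 x u p" "Dif g2 x u p"
    and nz: "f1 x u p \<noteq> 0" "g1 x u p \<noteq> 0" "f2 x u p \<noteq> 0" "g2 x u p \<noteq> 0" "l2 x u p \<noteq> l1 x u p"
    and Hg1: "pdx g1 x u p + p * pdu g1 x u p + phi x u p * pdp g1 x u p
        = (l1 x u p - (pdx f1 x u p + p * pdu f1 x u p + phi x u p * pdp f1 x u p) / f1 x u p) * g1 x u p"
    and Hg2: "pdx g2 x u p + p * pdu g2 x u p + phi x u p * pdp g2 x u p
        = (l2 x u p - (pdx f2 x u p + p * pdu f2 x u p + phi x u p * pdp f2 x u p) / f2 x u p) * g2 x u p"
    and S1: "pdx l1 x u p + p * pdu l1 x u p + phi x u p * pdp l1 x u p = pdu phi x u p + l1 x u p * pdp phi x u p - l1 x u p * l1 x u p"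
    and S2: "pdx l2 x u p + p * pdu l2 x u p + phi x u p * pdp l2 x u p = pdu phi x u p + l2 x u p * pdp phi x u p - l2 x u p * l2 x u p"
  shows "1 * pdx M x u p + p * pdu M x u p + phi x u p * pdp M x u p + M x u p * pdp phi x u p = 0"
proof -
  have Mv: "M x u p = 1 / (f1 x u p * g1 x u p * f2 x u p * g2 x u p * (l2 x u p - l1 x u p))" by (simp add: M)
  have Mx: "pdx M x u p = - (((f1 x u p * g1 x u p * f2 x u p * g2 x u p) * (pdx l2 x u p - pdx l1 x u p)
      + ((f1 x u p * g1 x u p * f2 x u p) * pdx g2 x u p + ((f1 x u p * g1 x u p) * pdx f2 x u p
      + (f1 x u p * pdx g1 x u p + pdx f1 x u p * g1 x u p) * f2 x u p) * g2 x u p) * (l2 x u p - l1 x u p))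
      / (f1 x u p * g1 x u p * f2 x u p * g2 x u p * (l2 x u p - l1 x u p))^2)"
    unfolding M
    apply (rule pdx_eq)
    apply (rule inv_deriv[where Df="\<lambda>t. f1 t u p * g1 t u p * f2 t u p * g2 t u p * (l2 t u p - l1 t u p)"])
     apply (rule DERIV_mult'[OF DERIV_mult'[OF DERIV_mult'[OF DERIV_mult']] DERIV_diff]; intro Dif_pdx D)
    apply (simp add: nz)
    done
  have Mu: "pdu M x u p = - (((f1 x u p * g1 x u p * f2 x u p * g2 x u p) * (pdu l2 x u p - pdu l1 x u p)
      + ((f1 x u p * g1 x u p * f2 x u p) * pdu g2 x u p + ((f1 x u p * g1 x u p) * pdu f2 x u p
      + (f1 x u p * pdu g1 x u p + pdu f1 x u p * g1 x u p) * f2 x u p) * g2 x u p) * (l2 x u p - l1 x u p))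
      / (f1 x u p * g1 x u p * f2 x u p * g2 x u p * (l2 x u p - l1 x u p))^2)"
    unfolding M
    apply (rule pdu_eq)
    apply (rule inv_deriv[where Df="\<lambda>t. f1 x t p * g1 x t p * f2 x t p * g2 x t p * (l2 x t p - l1 x t p)"])
     apply (rule DERIV_mult'[OF DERIV_mult'[OF DERIV_mult'[OF DERIV_mult']] DERIV_diff]; intro Dif_pdu D)
    apply (simp add: nz)
    done
  have Mp: "pdp M x u p = - (((f1 x u p * g1 x u p * f2 x u p * g2 x u p) * (pdp l2 x u p - pdp l1 x u p)
      + ((f1 x u p * g1 x u p * f2 x u p) * pdp g2 x u p + ((f1 x u p * g1 x u p) * pdp f2 x u p
      + (f1 x u p * pdp g1 x u p + pdp f1 x u p * g1 x u p) * f2 x u p) * g2 x u p) * (l2 x u p - l1 x u p))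
      / (f1 x u p * g1 x u p * f2 x u p * g2 x u p * (l2 x u p - l1 x u p))^2)"
    unfolding M
    apply (rule pdp_eq)
    apply (rule inv_deriv[where Df="\<lambda>t. f1 x u t * g1 x u t * f2 x u t * g2 x u t * (l2 x u t - l1 x u t)"])
     apply (rule DERIV_mult'[OF DERIV_mult'[OF DERIV_mult'[OF DERIV_mult']] DERIV_diff]; intro Dif_pdp D)
    apply (simp add: nz)
    done
  show ?thesis by (rule jac_alg[OF nz Hg1 Hg2 S1 S2 Mv Mx Mu Mp])
qed

lemma part_one:
  fixes U :: "(real\<times>real\<times>real) set" and phi l l' f g mu :: jfun
  assumes oU: "open U" and z0: "(x0,u0,p0)\<in>U"
    and mu: "mu = (\<lambda>x u p. 1 / (f x u p * g x u p * (l' x u p - l x u p)))"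
    and sm: "smooth_on U phi" "smooth_on U l" "smooth_on U l'" "smooth_on U f" "smooth_on U g"
    and nz: "\<forall>(x,u,p)\<in>U. f x u p \<noteq> 0 \<and> g x u p \<noteq> 0 \<and> l' x u p - l x u p \<noteq> 0"
    and S1: "\<forall>(x,u,p)\<in>U. pdx l x u p + p * pdu l x u p + phi x u p * pdp l x u p = pdu phi x u p + l x u p * pdp phi x u p - l x u p * l x u p"
    and S2: "\<forall>(x,u,p)\<in>U. pdx l' x u p + p * pdu l' x u p + phi x u p * pdp l' x u p = pdu phi x u p + l' x u p * pdp phi x u p - l' x u p * l' x u p"
    and HF: "\<forall>(x,u,p)\<in>U. (pdu f x u p + l x u p * pdp f x u p) / f x u p =
         ((pdu l' x u p + l x u p * pdp l' x u p) - (pdu l x u p + l' x u p * pdp l x u p)) / (l x u p - l' x u p)"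
    and HG1: "\<forall>(x,u,p)\<in>U. pdu g x u p + l x u p * pdp g x u p = 0"
    and HG2: "\<forall>(x,u,p)\<in>U. pdx g x u p + p * pdu g x u p + phi x u p * pdp g x u p =
         (l' x u p - (pdx f x u p + p * pdu f x u p + phi x u p * pdp f x u p) / f x u p) * g x u p"
  shows "\<exists>V. open V \<and> (x0,u0,p0)\<in>V \<and> V \<subseteq> U \<and> (\<exists>I. smooth_on V I \<and>
     (\<forall>(x,u,p)\<in>V. pdx I x u p = mu x u p * (l x u p * p - phi x u p) \<and> pdu I x u p = - l x u p * mu x u p
        \<and> pdp I x u p = mu x u p))"
proof -
  have smu: "smooth_on U mu" unfolding mu
    by (intro smooth_divide oU smooth_const smooth_mult smooth_diff sm) (use nz in auto)
  have sP: "smooth_on U (\<lambda>x u p. mu x u p * (l x u p * p - phi x u p))"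
    by (intro smooth_mult oU smu smooth_diff sm smooth_P)
  have sQ: "smooth_on U (\<lambda>x u p. - l x u p * mu x u p)"
    by (intro smooth_mult oU smu smooth_minus sm)
  have cl: "\<forall>(x,u,p)\<in>U. pdu (\<lambda>x u p. mu x u p * (l x u p * p - phi x u p)) x u p = pdx (\<lambda>x u p. - l x u p * mu x u p) x u p
     \<and> pdp (\<lambda>x u p. mu x u p * (l x u p * p - phi x u p)) x u p = pdx mu x u p
     \<and> pdp (\<lambda>x u p. - l x u p * mu x u p) x u p = pdu mu x u p"
  proof (intro ball3I conjI)
    fix x u p assume xU: "(x,u,p)\<in>U"
    note c = closed_pt[OF mu smooth_Dif[OF sm(1) xU] smooth_Dif[OF sm(2) xU] smooth_Dif[OF sm(3) xU]
        smooth_Dif[OF sm(4) xU] smooth_Dif[OF sm(5) xU] _ _ _ ball3D[OF S1 xU] ball3D[OF S2 xU]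
        ball3D[OF HF xU] ball3D[OF HG1 xU] ball3D[OF HG2 xU]]
    have n: "f x u p \<noteq> 0" "g x u p \<noteq> 0" "l' x u p - l x u p \<noteq> 0" using ball3D[OF nz xU] by auto
    show "pdu (\<lambda>x u p. mu x u p * (l x u p * p - phi x u p)) x u p = pdx (\<lambda>x u p. - l x u p * mu x u p) x u p"
      by (rule c(1)[OF n])
    show "pdp (\<lambda>x u p. mu x u p * (l x u p * p - phi x u p)) x u p = pdx mu x u p"
      by (rule c(2)[OF n])
    show "pdp (\<lambda>x u p. - l x u p * mu x u p) x u p = pdu mu x u p"
      by (rule c(3)[OF n])
  qed
  show ?thesis using poincare_local[OF oU z0 sP sQ smu cl] by simp
qed


theorem theorem4:
  fixes U :: "(real \<times> real \<times> real) set"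
    and phi lam1 lam2 f1 f2 g1 g2 rho rho1 rho2 mu1 mu2 M :: jfun
  assumes U_open: "open U"
    and phi_smooth: "smooth_on U phi"
    and sym1: "gen_Cinf_symmetry U phi (\<lambda>x u p. 0) (\<lambda>x u p. 1) lam1"
    and sym2: "gen_Cinf_symmetry U phi (\<lambda>x u p. 0) (\<lambda>x u p. 1) lam2"
    and noneq: "\<not> A_equivalent U phi (\<lambda>x u p. 0) (\<lambda>x u p. 1) lam1 (\<lambda>x u p. 0) (\<lambda>x u p. 1) lam2"
    and nz: "\<forall>(x,u,p)\<in>U. lam1 x u p - lam2 x u p \<noteq> 0 \<and> f1 x u p \<noteq> 0 \<and> f2 x u p \<noteq> 0
                         \<and> g1 x u p \<noteq> 0 \<and> g2 x u p \<noteq> 0"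
    and rho_def: "rho \<equiv> (\<lambda>x u p.
        (vf_apply ((\<lambda>x u p. 0), (\<lambda>x u p. 1), lam1) lam2 x u p
         - vf_apply ((\<lambda>x u p. 0), (\<lambda>x u p. 1), lam2) lam1 x u p)
        / (lam1 x u p - lam2 x u p))"
    and f_smooth: "smooth_on U f1" "smooth_on U f2"
    and f_eqs: "\<forall>(x,u,p)\<in>U.
        vf_apply ((\<lambda>x u p. 0), (\<lambda>x u p. 1), lam1) f2 x u p / f2 x u p = rho x u p \<and>
        vf_apply ((\<lambda>x u p. 0), (\<lambda>x u p. 1), lam2) f1 x u p / f1 x u p = rho x u p"
    and rho1_def: "rho1 \<equiv> (\<lambda>x u p. lam1 x u p - vf_apply (Avf phi) f1 x u p / f1 x u p)"
    and rho2_def: "rho2 \<equiv> (\<lambda>x u p. lam2 x u p - vf_apply (Avf phi) f2 x u p / f2 x u p)"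
    and g_smooth: "smooth_on U g1" "smooth_on U g2"
    and g_eqs: "\<forall>(x,u,p)\<in>U.
        vf_apply (Avf phi) g1 x u p = rho1 x u p * g1 x u p \<and>
        vf_apply ((\<lambda>x u p. 0), (\<lambda>x u p. f2 x u p), (\<lambda>x u p. f2 x u p * lam2 x u p)) g1 x u p = 0 \<and>
        vf_apply (Avf phi) g2 x u p = rho2 x u p * g2 x u p \<and>
        vf_apply ((\<lambda>x u p. 0), (\<lambda>x u p. f1 x u p), (\<lambda>x u p. f1 x u p * lam1 x u p)) g2 x u p = 0"
    and mu1_def: "mu1 \<equiv> (\<lambda>x u p. 1 / (f2 x u p * g2 x u p * (lam2 x u p - lam1 x u p)))"
    and mu2_def: "mu2 \<equiv> (\<lambda>x u p. 1 / (f1 x u p * g1 x u p * (lam1 x u p - lam2 x u p)))"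
    and M_def: "M \<equiv> (\<lambda>x u p. 1 / (f1 x u p * g1 x u p * f2 x u p * g2 x u p
                                  * (lam2 x u p - lam1 x u p)))"
  shows "(\<forall>z0\<in>U. \<exists>V. open V \<and> z0 \<in> V \<and> V \<subseteq> U \<and>
            integrating_factor_on V phi mu1 \<and> integrating_factor_on V phi mu2 \<and>
            (\<exists>I1. smooth_on V I1 \<and> (\<forall>(x,u,p)\<in>V.
                pdx I1 x u p = mu1 x u p * (lam1 x u p * p - phi x u p) \<and>
                pdu I1 x u p = - lam1 x u p * mu1 x u p \<and> pdp I1 x u p = mu1 x u p)) \<and>
            (\<forall>I1. smooth_on V I1 \<and> (\<forall>(x,u,p)\<in>V.
                pdx I1 x u p = mu1 x u p * (lam1 x u p * p - phi x u p) \<and>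
                pdu I1 x u p = - lam1 x u p * mu1 x u p \<and> pdp I1 x u p = mu1 x u p)
              \<longrightarrow> first_integral_assoc V phi (\<lambda>x u p. 0) (\<lambda>x u p. 1) lam1 I1) \<and>
            (\<exists>I2. smooth_on V I2 \<and> (\<forall>(x,u,p)\<in>V.
                pdx I2 x u p = mu2 x u p * (lam2 x u p * p - phi x u p) \<and>
                pdu I2 x u p = - lam2 x u p * mu2 x u p \<and> pdp I2 x u p = mu2 x u p)) \<and>
            (\<forall>I2. smooth_on V I2 \<and> (\<forall>(x,u,p)\<in>V.
                pdx I2 x u p = mu2 x u p * (lam2 x u p * p - phi x u p) \<and>
                pdu I2 x u p = - lam2 x u p * mu2 x u p \<and> pdp I2 x u p = mu2 x u p)
              \<longrightarrow> first_integral_assoc V phi (\<lambda>x u p. 0) (\<lambda>x u p. 1) lam2 I2))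
         \<and> jacobi_last_multiplier U phi M"
proof -
  note oU = U_open
  have slam1: "smooth_on U lam1" using sym1 unfolding gen_Cinf_symmetry_def by blast
  have slam2: "smooth_on U lam2" using sym2 unfolding gen_Cinf_symmetry_def by blast
  have mu1e: "mu1 = (\<lambda>x u p. 1 / (f2 x u p * g2 x u p * (lam2 x u p - lam1 x u p)))" using mu1_def by simp
  have mu2e: "mu2 = (\<lambda>x u p. 1 / (f1 x u p * g1 x u p * (lam1 x u p - lam2 x u p)))" using mu2_def by simp
  have Me: "M = (\<lambda>x u p. 1 / (f1 x u p * g1 x u p * f2 x u p * g2 x u p * (lam2 x u p - lam1 x u p)))" using M_def by simp
  have NZ: "lam1 x u p - lam2 x u p \<noteq> 0" "f1 x u p \<noteq> 0" "f2 x u p \<noteq> 0" "g1 x u p \<noteq> 0" "g2 x u p \<noteq> 0"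
    if "(x,u,p)\<in>U" for x u p using ball3D[OF nz that] by auto
  have S1: "\<forall>(x,u,p)\<in>U. pdx lam1 x u p + p * pdu lam1 x u p + phi x u p * pdp lam1 x u p = pdu phi x u p + lam1 x u p * pdp phi x u p - lam1 x u p * lam1 x u p"
    by (intro ball3I) (rule sym_eq[OF sym1])
  have S2: "\<forall>(x,u,p)\<in>U. pdx lam2 x u p + p * pdu lam2 x u p + phi x u p * pdp lam2 x u p = pdu phi x u p + lam2 x u p * pdp phi x u p - lam2 x u p * lam2 x u p"
    by (intro ball3I) (rule sym_eq[OF sym2])
  have FE: "(pdu f2 x u p + lam1 x u p * pdp f2 x u p) / f2 x u p =
         ((pdu lam2 x u p + lam1 x u p * pdp lam2 x u p) - (pdu lam1 x u p + lam2 x u p * pdp lam1 x u p)) / (lam1 x u p - lam2 x u p)"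
    "(pdu f1 x u p + lam2 x u p * pdp f1 x u p) / f1 x u p =
         ((pdu lam2 x u p + lam1 x u p * pdp lam2 x u p) - (pdu lam1 x u p + lam2 x u p * pdp lam1 x u p)) / (lam1 x u p - lam2 x u p)"
    if "(x,u,p)\<in>U" for x u p
    using ball3D[OF f_eqs that] unfolding rho_def by (simp_all add: vf_apply_def)
  have HF1: "\<forall>(x,u,p)\<in>U. (pdu f2 x u p + lam1 x u p * pdp f2 x u p) / f2 x u p =
         ((pdu lam2 x u p + lam1 x u p * pdp lam2 x u p) - (pdu lam1 x u p + lam2 x u p * pdp lam1 x u p)) / (lam1 x u p - lam2 x u p)"
    using FE(1) by (intro ball3I)
  have HF2: "\<forall>(x,u,p)\<in>U. (pdu f1 x u p + lam2 x u p * pdp f1 x u p) / f1 x u p =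
         ((pdu lam1 x u p + lam2 x u p * pdp lam1 x u p) - (pdu lam2 x u p + lam1 x u p * pdp lam2 x u p)) / (lam2 x u p - lam1 x u p)"
  proof (intro ball3I)
    fix x u p assume "(x,u,p)\<in>U"
    from FE(2)[OF this] show "(pdu f1 x u p + lam2 x u p * pdp f1 x u p) / f1 x u p =
         ((pdu lam1 x u p + lam2 x u p * pdp lam1 x u p) - (pdu lam2 x u p + lam1 x u p * pdp lam2 x u p)) / (lam2 x u p - lam1 x u p)"
      by (metis minus_diff_eq minus_divide_divide)
  qed
  have GE: "pdx g1 x u p + p * pdu g1 x u p + phi x u p * pdp g1 x u p
        = (lam1 x u p - (pdx f1 x u p + p * pdu f1 x u p + phi x u p * pdp f1 x u p) / f1 x u p) * g1 x u p"
    "f2 x u p * pdu g1 x u p + f2 x u p * lam2 x u p * pdp g1 x u p = 0"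
    "pdx g2 x u p + p * pdu g2 x u p + phi x u p * pdp g2 x u p
        = (lam2 x u p - (pdx f2 x u p + p * pdu f2 x u p + phi x u p * pdp f2 x u p) / f2 x u p) * g2 x u p"
    "f1 x u p * pdu g2 x u p + f1 x u p * lam1 x u p * pdp g2 x u p = 0"
    if "(x,u,p)\<in>U" for x u p
    using ball3D[OF g_eqs that] unfolding rho1_def rho2_def by (simp_all add: vf_apply_def Avf_def)
  have HG1a: "\<forall>(x,u,p)\<in>U. pdu g2 x u p + lam1 x u p * pdp g2 x u p = 0"
  proof (intro ball3I)
    fix x u p assume xU: "(x,u,p)\<in>U"
    have "f1 x u p * (pdu g2 x u p + lam1 x u p * pdp g2 x u p) = 0" using GE(4)[OF xU] by (simp add: algebra_simps)
    thus "pdu g2 x u p + lam1 x u p * pdp g2 x u p = 0" using NZ(2)[OF xU] by simp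
  qed
  have HG1b: "\<forall>(x,u,p)\<in>U. pdu g1 x u p + lam2 x u p * pdp g1 x u p = 0"
  proof (intro ball3I)
    fix x u p assume xU: "(x,u,p)\<in>U"
    have "f2 x u p * (pdu g1 x u p + lam2 x u p * pdp g1 x u p) = 0" using GE(2)[OF xU] by (simp add: algebra_simps)
    thus "pdu g1 x u p + lam2 x u p * pdp g1 x u p = 0" using NZ(3)[OF xU] by simp
  qed
  have HG2a: "\<forall>(x,u,p)\<in>U. pdx g2 x u p + p * pdu g2 x u p + phi x u p * pdp g2 x u p
        = (lam2 x u p - (pdx f2 x u p + p * pdu f2 x u p + phi x u p * pdp f2 x u p) / f2 x u p) * g2 x u p"
    using GE(3) by (intro ball3I)
  have HG2b: "\<forall>(x,u,p)\<in>U. pdx g1 x u p + p * pdu g1 x u p + phi x u p * pdp g1 x u p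
        = (lam1 x u p - (pdx f1 x u p + p * pdu f1 x u p + phi x u p * pdp f1 x u p) / f1 x u p) * g1 x u p"
    using GE(1) by (intro ball3I)
  have nz1: "\<forall>(x,u,p)\<in>U. f2 x u p \<noteq> 0 \<and> g2 x u p \<noteq> 0 \<and> lam2 x u p - lam1 x u p \<noteq> 0"
  proof (intro ball3I)
    fix x u p assume xU: "(x,u,p)\<in>U"
    show "f2 x u p \<noteq> 0 \<and> g2 x u p \<noteq> 0 \<and> lam2 x u p - lam1 x u p \<noteq> 0" using NZ[OF xU] by auto
  qed
  have nz2: "\<forall>(x,u,p)\<in>U. f1 x u p \<noteq> 0 \<and> g1 x u p \<noteq> 0 \<and> lam1 x u p - lam2 x u p \<noteq> 0"
  proof (intro ball3I)
    fix x u p assume xU: "(x,u,p)\<in>U"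
    show "f1 x u p \<noteq> 0 \<and> g1 x u p \<noteq> 0 \<and> lam1 x u p - lam2 x u p \<noteq> 0" using NZ[OF xU] by auto
  qed
  have third: "snd (snd (lam_prol phi (\<lambda>x u p. 0) (\<lambda>x u p. 1) lam)) x u p = lam x u p" for lam x u p
    by (simp add: lam_prol_def Aplus_def Avf_def vf_apply_def)
  have fi: "first_integral_assoc V phi (\<lambda>x u p. 0) (\<lambda>x u p. 1) lam I"
    if "\<forall>(x,u,p)\<in>V. pdx I x u p = mu x u p * (lam x u p * p - phi x u p) \<and>
                pdu I x u p = - lam x u p * mu x u p \<and> pdp I x u p = mu x u p" for V lam mu I
    unfolding first_integral_assoc_def
  proof (intro ball3I conjI)
    fix x u p assume "(x,u,p)\<in>V"
    hence e: "pdx I x u p = mu x u p * (lam x u p * p - phi x u p)" "pdu I x u p = - lam x u p * mu x u p"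
      "pdp I x u p = mu x u p" using that by auto
    show "vf_apply (Avf phi) I x u p = 0" by (simp add: vf_apply_def Avf_def e algebra_simps)
    show "vf_apply (lam_prol phi (\<lambda>x u p. 0) (\<lambda>x u p. 1) lam) I x u p = 0"
    proof -
      have va: "vf_apply V' F x u p = fst V' x u p * pdx F x u p + fst (snd V') x u p * pdu F x u p + snd (snd V') x u p * pdp F x u p" for V' F
        by (cases V') (auto simp: vf_apply_def)
      have l1: "fst (lam_prol phi (\<lambda>x u p. 0) (\<lambda>x u p. 1) lam) = (\<lambda>x u p. 0)" by (simp add: lam_prol_def)
      have l2: "fst (snd (lam_prol phi (\<lambda>x u p. 0) (\<lambda>x u p. 1) lam)) = (\<lambda>x u p. 1)" by (simp add: lam_prol_def)
      show ?thesis unfolding va l1 l2 third e by simp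
    qed
  qed
  have ifa: "integrating_factor_on V phi mu"
    if "smooth_on V I" "\<forall>(x,u,p)\<in>V. pdx I x u p = mu x u p * (lam x u p * p - phi x u p) \<and>
                pdu I x u p = - lam x u p * mu x u p \<and> pdp I x u p = mu x u p" for V lam mu I
    unfolding integrating_factor_on_def
  proof (intro exI[of _ I] conjI ball3I allI)
    show "smooth_on V I" by (rule that(1))
    fix x u p q assume "(x,u,p)\<in>V"
    hence e: "pdx I x u p = mu x u p * (lam x u p * p - phi x u p)" "pdu I x u p = - lam x u p * mu x u p"
      "pdp I x u p = mu x u p" using that(2) by auto
    show "mu x u p * (q - phi x u p) = pdx I x u p + p * pdu I x u p + q * pdp I x u p"
      by (simp add: e algebra_simps)
  qed
  have part1: "\<exists>V. open V \<and> z0 \<in> V \<and> V \<subseteq> U \<and>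
            integrating_factor_on V phi mu1 \<and> integrating_factor_on V phi mu2 \<and>
            (\<exists>I1. smooth_on V I1 \<and> (\<forall>(x,u,p)\<in>V.
                pdx I1 x u p = mu1 x u p * (lam1 x u p * p - phi x u p) \<and>
                pdu I1 x u p = - lam1 x u p * mu1 x u p \<and> pdp I1 x u p = mu1 x u p)) \<and>
            (\<forall>I1. smooth_on V I1 \<and> (\<forall>(x,u,p)\<in>V.
                pdx I1 x u p = mu1 x u p * (lam1 x u p * p - phi x u p) \<and>
                pdu I1 x u p = - lam1 x u p * mu1 x u p \<and> pdp I1 x u p = mu1 x u p)
              \<longrightarrow> first_integral_assoc V phi (\<lambda>x u p. 0) (\<lambda>x u p. 1) lam1 I1) \<and>
            (\<exists>I2. smooth_on V I2 \<and> (\<forall>(x,u,p)\<in>V.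
                pdx I2 x u p = mu2 x u p * (lam2 x u p * p - phi x u p) \<and>
                pdu I2 x u p = - lam2 x u p * mu2 x u p \<and> pdp I2 x u p = mu2 x u p)) \<and>
            (\<forall>I2. smooth_on V I2 \<and> (\<forall>(x,u,p)\<in>V.
                pdx I2 x u p = mu2 x u p * (lam2 x u p * p - phi x u p) \<and>
                pdu I2 x u p = - lam2 x u p * mu2 x u p \<and> pdp I2 x u p = mu2 x u p)
              \<longrightarrow> first_integral_assoc V phi (\<lambda>x u p. 0) (\<lambda>x u p. 1) lam2 I2)"
    if z0U: "z0 \<in> U" for z0
  proof -
    obtain x0 u0 p0 where z0: "z0 = (x0,u0,p0)" by (cases z0)
    have z0': "(x0,u0,p0)\<in>U" using z0U z0 by simp
    obtain V1 I1 where V1: "open V1" "(x0,u0,p0)\<in>V1" "V1 \<subseteq> U" "smooth_on V1 I1"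
      and I1: "\<forall>(x,u,p)\<in>V1. pdx I1 x u p = mu1 x u p * (lam1 x u p * p - phi x u p) \<and> pdu I1 x u p = - lam1 x u p * mu1 x u p
        \<and> pdp I1 x u p = mu1 x u p"
      using part_one[OF oU z0' mu1e phi_smooth slam1 slam2 f_smooth(2) g_smooth(2) nz1 S1 S2 HF1 HG1a HG2a] by blast
    obtain V2 I2 where V2: "open V2" "(x0,u0,p0)\<in>V2" "V2 \<subseteq> U" "smooth_on V2 I2"
      and I2: "\<forall>(x,u,p)\<in>V2. pdx I2 x u p = mu2 x u p * (lam2 x u p * p - phi x u p) \<and> pdu I2 x u p = - lam2 x u p * mu2 x u p
        \<and> pdp I2 x u p = mu2 x u p"
      using part_one[OF oU z0' mu2e phi_smooth slam2 slam1 f_smooth(1) g_smooth(1) nz2 S2 S1 HF2 HG1b HG2b] by blast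
    define V where "V = V1 \<inter> V2"
    have sI1: "smooth_on V I1" using smooth_subset[OF _ V1(4), of V] by (auto simp: V_def)
    have sI2: "smooth_on V I2" using smooth_subset[OF _ V2(4), of V] by (auto simp: V_def)
    have I1V: "\<forall>(x,u,p)\<in>V. pdx I1 x u p = mu1 x u p * (lam1 x u p * p - phi x u p) \<and> pdu I1 x u p = - lam1 x u p * mu1 x u p
        \<and> pdp I1 x u p = mu1 x u p" using I1 by (auto simp: V_def)
    have I2V: "\<forall>(x,u,p)\<in>V. pdx I2 x u p = mu2 x u p * (lam2 x u p * p - phi x u p) \<and> pdu I2 x u p = - lam2 x u p * mu2 x u p
        \<and> pdp I2 x u p = mu2 x u p" using I2 by (auto simp: V_def)
    show ?thesis
    proof (intro exI[of _ V] conjI allI impI)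
      show "open V" using V1 V2 by (auto simp: V_def)
      show "z0 \<in> V" using V1 V2 z0 by (auto simp: V_def)
      show "V \<subseteq> U" using V1 V2 by (auto simp: V_def)
      show "integrating_factor_on V phi mu1" by (rule ifa[OF sI1 I1V])
      show "integrating_factor_on V phi mu2" by (rule ifa[OF sI2 I2V])
      show "\<exists>I1. smooth_on V I1 \<and> (\<forall>(x,u,p)\<in>V. pdx I1 x u p = mu1 x u p * (lam1 x u p * p - phi x u p) \<and>
                pdu I1 x u p = - lam1 x u p * mu1 x u p \<and> pdp I1 x u p = mu1 x u p)" using sI1 I1V by blast
      show "\<exists>I2. smooth_on V I2 \<and> (\<forall>(x,u,p)\<in>V. pdx I2 x u p = mu2 x u p * (lam2 x u p * p - phi x u p) \<and>
                pdu I2 x u p = - lam2 x u p * mu2 x u p \<and> pdp I2 x u p = mu2 x u p)" using sI2 I2V by blast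
    next
      fix J assume "smooth_on V J \<and> (\<forall>(x,u,p)\<in>V. pdx J x u p = mu1 x u p * (lam1 x u p * p - phi x u p) \<and>
                pdu J x u p = - lam1 x u p * mu1 x u p \<and> pdp J x u p = mu1 x u p)"
      thus "first_integral_assoc V phi (\<lambda>x u p. 0) (\<lambda>x u p. 1) lam1 J" using fi by blast
    next
      fix J assume "smooth_on V J \<and> (\<forall>(x,u,p)\<in>V. pdx J x u p = mu2 x u p * (lam2 x u p * p - phi x u p) \<and>
                pdu J x u p = - lam2 x u p * mu2 x u p \<and> pdp J x u p = mu2 x u p)"
      thus "first_integral_assoc V phi (\<lambda>x u p. 0) (\<lambda>x u p. 1) lam2 J" using fi by blast
    qed
  qed
  have part2: "jacobi_last_multiplier U phi M"
    unfolding jacobi_last_multiplier_def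
  proof (intro ball3I)
    fix x u p assume xU: "(x,u,p)\<in>U"
    have n5: "lam2 x u p \<noteq> lam1 x u p" using NZ(1)[OF xU] by auto
    have "1 * pdx M x u p + p * pdu M x u p + phi x u p * pdp M x u p + M x u p * pdp phi x u p = 0"
      by (rule jac_pt[OF Me smooth_Dif[OF phi_smooth xU] smooth_Dif[OF slam1 xU] smooth_Dif[OF slam2 xU]
          smooth_Dif[OF f_smooth(1) xU] smooth_Dif[OF g_smooth(1) xU] smooth_Dif[OF f_smooth(2) xU] smooth_Dif[OF g_smooth(2) xU]
          NZ(2,4,3,5)[OF xU] n5 ball3D[OF HG2b xU] ball3D[OF HG2a xU] ball3D[OF S1 xU] ball3D[OF S2 xU]])
    thus "vf_apply (Avf phi) M x u p + M x u p * pdp phi x u p = 0" by (simp add: vf_apply_def Avf_def)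
  qed
  show ?thesis using part1 part2 by blast
qed

end
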